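(* Suppose $p,q\in[1,\infty]$, $w$ is a positive measurable function on $\mathbb R^n$, and there exists a constant $C$ such that $\|w\widehat f\|_{L^q(\mathbb R^n)}\le C\|wf\|_{L^p(\mathbb R^n)}$ whenever $f$ is integrable and $wf\in L^p(\mathbb R^n)$. Then $1\le p\le 2$, $q=p'$ (where $1/p+1/p'=1$), and there exist positive real numbers $m$ and $M$ such that $m\le w(x)\le M$ for almost every $x\in\mathbb R^n$.
   Context: The Fourier transform of an integrable $f\colon\mathbb R^n\to\mathbb C$ is $\widehat f(x)=\int_{\mathbb R^n}e^{-2\pi i x\cdot t}f(t)\,dt$. *)

theory Defs
  imports "HOL-Analysis.Analysis" "HOL-Probability.Essential_Supremum"
begin

definition fourier :: "('a::euclidean_space \<Rightarrow> complex) \<Rightarrow> 'a \<Rightarrow> complex" where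
  "fourier f x = (\<integral>t. cis (- 2 * pi * (x \<bullet> t)) * f t \<partial>lebesgue)"

definition Lp_norm :: "ennreal \<Rightarrow> ('a::euclidean_space \<Rightarrow> 'b::real_normed_vector) \<Rightarrow> ennreal" where
  "Lp_norm p g =
     (if p = \<infinity> then esssup lebesgue (\<lambda>x. ennreal (norm (g x)))
      else (let I = (\<integral>\<^sup>+ x. ennreal (norm (g x) powr enn2real p) \<partial>lebesgue)
            in if I = \<infinity> then \<infinity> else ennreal (enn2real I powr (1 / enn2real p))))"

end

theory Submission
  imports Defs
begin

lemma bm_leb: "f \<in> borel_measurable borel \<Longrightarrow> f \<in> borel_measurable (lebesgue :: 'a::euclidean_space measure)"
  by (drule measurable_comp[OF id_borel_measurable_lebesgue]) (simp add: comp_def)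

lemma cont_meas_leb: "continuous_on UNIV f \<Longrightarrow> f \<in> borel_measurable (lebesgue :: 'a::euclidean_space measure)"
  by (intro bm_leb borel_measurable_continuous_onI)

lemma cis_meas[measurable]: "(\<lambda>x::'a::euclidean_space. cis (c * (b \<bullet> x))) \<in> borel_measurable lebesgue"
  by (intro cont_meas_leb continuous_intros)

lemma cis_meas2[measurable]: "(\<lambda>x::'a::euclidean_space. cis (c * (b \<bullet> (x - d)))) \<in> borel_measurable lebesgue"
  by (intro cont_meas_leb continuous_intros)

lemma cind_meas[measurable]: assumes [measurable]: "E \<in> sets M" shows "(\<lambda>x. complex_of_real (indicator E x)) \<in> borel_measurable M"
  by measurable

lemma cos_ge_half: assumes "\<bar>y\<bar> \<le> pi/4" shows "cos y \<ge> 1/2"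
proof -
  have "cos (pi/4) \<le> cos \<bar>y\<bar>"
    by (rule cos_monotone_0_pi_le) (use assms in auto)
  moreover have "cos \<bar>y\<bar> = cos y" by (cases "y \<ge> 0") auto
  ultimately have a: "sqrt 2 / 2 \<le> cos y" by (simp add: cos_45)
  have "(1::real) \<le> sqrt 2" by simp
  with a show ?thesis by linarith
qed

lemma integrable_cind:
  fixes g :: "'a::euclidean_space \<Rightarrow> complex"
  assumes E: "E \<in> sets lebesgue" "emeasure lebesgue E < \<infinity>"
    and g: "g \<in> borel_measurable lebesgue" "\<And>t. norm (g t) \<le> 1"
  shows "integrable lebesgue (\<lambda>t. g t * complex_of_real (indicator E t))"
proof (rule Bochner_Integration.integrable_bound)
  show "integrable lebesgue (indicator E :: 'a \<Rightarrow> real)"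
    using E by (simp add: integrable_indicator_iff)
  show "(\<lambda>t. g t * complex_of_real (indicator E t)) \<in> borel_measurable lebesgue"
    using E g by measurable
  show "AE x in lebesgue. norm (g x * complex_of_real (indicator E x)) \<le> norm (indicator E x :: real)"
    using g(2) by (auto simp: indicator_def norm_mult)
qed

lemma ft_lower:
  fixes E :: "'a::euclidean_space set"
  assumes E: "E \<in> sets lebesgue" "E \<subseteq> cball c r" "emeasure lebesgue E < \<infinity>"
    and r: "r > 0" and x: "dist x b0 \<le> 1/(8*r)"
  shows "norm (fourier (\<lambda>t. cis (2*pi*(b0 \<bullet> t)) * complex_of_real (indicator E t)) x) \<ge> measure lebesgue E / 2"
proof -
  define v where "v = x - b0"
  have nv: "norm v \<le> 1/(8*r)" using x by (simp add: v_def dist_norm)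
  define G where "G t = cis (-2*pi*(v \<bullet> (t - c))) * complex_of_real (indicator E t)" for t
  have Gi: "integrable lebesgue G"
    unfolding G_def by (rule integrable_cind[OF E(1) E(3)]) (auto intro!: cont_meas_leb continuous_intros)
  have eq: "cis (- 2 * pi * (x \<bullet> t)) * (cis (2*pi*(b0 \<bullet> t)) * complex_of_real (indicator E t))
      = cis (-2*pi*(v \<bullet> c)) * G t" for t
  proof -
    have "cis (- 2 * pi * (x \<bullet> t)) * cis (2*pi*(b0 \<bullet> t)) = cis (-2*pi*(v \<bullet> c)) * cis (-2*pi*(v \<bullet> (t - c)))"
      by (simp add: cis_mult v_def inner_diff_left inner_diff_right algebra_simps)
    then show ?thesis by (simp add: G_def mult.assoc)
  qed
  have "fourier (\<lambda>t. cis (2*pi*(b0 \<bullet> t)) * complex_of_real (indicator E t)) x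
      = cis (-2*pi*(v \<bullet> c)) * integral\<^sup>L lebesgue G"
    unfolding fourier_def eq by (rule integral_mult_right_zero)
  then have "norm (fourier (\<lambda>t. cis (2*pi*(b0 \<bullet> t)) * complex_of_real (indicator E t)) x) = norm (integral\<^sup>L lebesgue G)"
    by (simp add: norm_mult)
  also have "\<dots> \<ge> Re (integral\<^sup>L lebesgue G)"
    by (rule complex_Re_le_cmod)
  finally have 1: "Re (integral\<^sup>L lebesgue G) \<le> norm (fourier (\<lambda>t. cis (2*pi*(b0 \<bullet> t)) * complex_of_real (indicator E t)) x)" .
  have 2: "Re (integral\<^sup>L lebesgue G) = (\<integral>t. Re (G t) \<partial>lebesgue)"
    using Gi by simp
  have ReG: "Re (G t) = cos (2*pi*(v \<bullet> (t - c))) * indicator E t" for t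
    by (simp add: G_def indicator_def)
  have ReGi: "integrable lebesgue (\<lambda>t. Re (G t))"
    using Gi by (rule integrable_Re)
  have indi: "integrable lebesgue (\<lambda>t. (1/2::real) * indicator E t)"
    using E by (simp add: integrable_indicator_iff)
  have 3: "(\<integral>t. (1/2::real) * indicator E t \<partial>lebesgue) \<le> (\<integral>t. Re (G t) \<partial>lebesgue)"
  proof (rule integral_mono[OF indi ReGi])
    fix t
    show "(1/2::real) * indicator E t \<le> Re (G t)"
    proof (cases "t \<in> E")
      case True
      then have "dist c t \<le> r" using E(2) by auto
      then have nt: "norm (t - c) \<le> r" by (simp add: dist_norm norm_minus_commute)
      have "\<bar>v \<bullet> (t - c)\<bar> \<le> norm v * norm (t - c)" by (rule Cauchy_Schwarz_ineq2)
      also have "\<dots> \<le> (1/(8*r)) * r"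
        by (intro mult_mono nv nt) (use r in auto)
      also have "\<dots> = 1/8" using r by simp
      finally have "\<bar>v \<bullet> (t - c)\<bar> \<le> 1/8" .
      then have "\<bar>2*pi*(v \<bullet> (t - c))\<bar> \<le> pi/4"
        by (simp add: abs_mult)
      then have "cos (2*pi*(v \<bullet> (t - c))) \<ge> 1/2" by (rule cos_ge_half)
      then show ?thesis using True by (simp add: ReG)
    qed (simp add: ReG)
  qed
  have 4: "(\<integral>t. (1/2::real) * indicator E t \<partial>lebesgue) = measure lebesgue E / 2"
    by simp
  show ?thesis using 1 2 3 4 by linarith
qed

definition ia :: "ennreal \<Rightarrow> real" where "ia p = (if p = \<infinity> then 0 else 1 / enn2real p)"

lemma Lp_norm_fin:
  assumes "p \<noteq> \<infinity>"
  shows "Lp_norm p g = (let I = (\<integral>\<^sup>+ x. ennreal (norm (g x) powr enn2real p) \<partial>lebesgue)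
            in if I = \<infinity> then \<infinity> else ennreal (enn2real I powr (1 / enn2real p)))"
  using assms by (simp add: Lp_norm_def)

lemma enn2real_ge1: assumes "1 \<le> p" "p \<noteq> \<infinity>" shows "1 \<le> enn2real p"
proof -
  have "enn2real 1 \<le> enn2real p" by (rule enn2real_mono) (use assms in \<open>auto simp: less_top\<close>)
  then show ?thesis by simp
qed

lemma Lp_upper:
  fixes h :: "'a::euclidean_space \<Rightarrow> 'b::real_normed_vector"
  assumes p: "1 \<le> p" and h: "h \<in> borel_measurable lebesgue"
    and E: "E \<in> sets lebesgue" "emeasure lebesgue E < \<infinity>" and K: "K \<ge> 0"
    and bd: "AE x in lebesgue. norm (h x) \<le> K * indicator E x"
  shows "Lp_norm p h \<le> ennreal (K * measure lebesgue E powr ia p)"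
proof (cases "p = \<infinity>")
  case True
  have hm: "(\<lambda>x. ennreal (norm (h x))) \<in> borel_measurable lebesgue" using h by measurable
  show ?thesis
  proof (cases "measure lebesgue E = 0")
    case True
    have "emeasure lebesgue E = ennreal (measure lebesgue E)" using E(2) by (intro emeasure_eq_ennreal_measure) simp
    then have "emeasure lebesgue E = 0" using True by simp
    then have "E \<in> null_sets lebesgue" using E by (simp add: null_setsI)
    then have "AE x in lebesgue. x \<notin> E" by (rule AE_not_in)
    with bd have "AE x in lebesgue. ennreal (norm (h x)) \<le> 0"
      by eventually_elim (simp add: indicator_def)
    then have "esssup lebesgue (\<lambda>x. ennreal (norm (h x))) \<le> 0" using hm by (rule esssup_I[rotated])
    then show ?thesis using \<open>p = \<infinity>\<close> by (simp add: Lp_norm_def)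
  next
    case False
    have "AE x in lebesgue. ennreal (norm (h x)) \<le> ennreal K"
      using bd
    proof eventually_elim
      case (elim x)
      then have "norm (h x) \<le> K" using K by (cases "x \<in> E") auto
      then show ?case by (rule ennreal_leI)
    qed
    then have "esssup lebesgue (\<lambda>x. ennreal (norm (h x))) \<le> ennreal K" using hm by (rule esssup_I[rotated])
    moreover have "measure lebesgue E powr ia p = 1" using False \<open>p = \<infinity>\<close> by (simp add: ia_def)
    ultimately show ?thesis using \<open>p = \<infinity>\<close> by (simp add: Lp_norm_def)
  qed
next
  case False
  define pr where "pr = enn2real p"
  have pr1: "1 \<le> pr" unfolding pr_def using p False by (rule enn2real_ge1)
  define I where "I = (\<integral>\<^sup>+ x. ennreal (norm (h x) powr pr) \<partial>lebesgue)"
  have "I \<le> (\<integral>\<^sup>+ x. ennreal (K powr pr) * indicator E x \<partial>lebesgue)"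
    unfolding I_def
  proof (rule nn_integral_mono_AE)
    show "AE x in lebesgue. ennreal (norm (h x) powr pr) \<le> ennreal (K powr pr) * indicator E x"
      using bd
    proof eventually_elim
      case (elim x)
      show ?case
      proof (cases "x \<in> E")
        case True
        then have "norm (h x) powr pr \<le> K powr pr" using elim pr1 by (intro powr_mono2) auto
        then show ?thesis using True by (auto intro: ennreal_leI)
      next
        case False
        then have "norm (h x) = 0" using elim by simp
        then show ?thesis using pr1 by simp
      qed
    qed
  qed
  also have "\<dots> = ennreal (K powr pr) * emeasure lebesgue E"
    using E by (simp add: nn_integral_cmult_indicator)
  also have "emeasure lebesgue E = ennreal (measure lebesgue E)" using E(2) by (intro emeasure_eq_ennreal_measure) simp
  also have "ennreal (K powr pr) * ennreal (measure lebesgue E) = ennreal (K powr pr * measure lebesgue E)"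
    by (rule ennreal_mult[symmetric]) auto
  finally have Ile: "I \<le> ennreal (K powr pr * measure lebesgue E)" .
  then have Ifin: "I \<noteq> \<infinity>" by (auto simp: top_unique)
  have "enn2real I \<le> K powr pr * measure lebesgue E"
    using Ile by (simp add: enn2real_leI)
  then have "enn2real I powr (1/pr) \<le> (K powr pr * measure lebesgue E) powr (1/pr)"
    using pr1 by (intro powr_mono2) auto
  also have "\<dots> = (K powr pr) powr (1/pr) * measure lebesgue E powr (1/pr)"
    by (rule powr_mult; simp)
  also have "(K powr pr) powr (1/pr) = K"
    using pr1 K by (simp add: powr_powr)
  also have "K * measure lebesgue E powr (1/pr) = K * measure lebesgue E powr ia p"
    using False by (simp add: ia_def pr_def)
  finally have le: "enn2real I powr (1/pr) \<le> K * measure lebesgue E powr ia p" .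
  have "Lp_norm p h = ennreal (enn2real I powr (1/pr))"
    using False Ifin unfolding Lp_norm_def I_def pr_def Let_def by simp
  then show ?thesis using le by (simp add: ennreal_leI)
qed

lemma Lp_lower_fin:
  fixes h :: "'a::euclidean_space \<Rightarrow> 'b::real_normed_vector"
  assumes q: "1 \<le> q" "q \<noteq> \<infinity>" and Y: "Y \<ge> 0"
    and le: "ennreal Y \<le> (\<integral>\<^sup>+ x. ennreal (norm (h x) powr enn2real q) \<partial>lebesgue)"
  shows "ennreal (Y powr (1 / enn2real q)) \<le> Lp_norm q h"
proof -
  define I where "I = (\<integral>\<^sup>+ x. ennreal (norm (h x) powr enn2real q) \<partial>lebesgue)"
  have q1: "1 \<le> enn2real q" using q by (rule enn2real_ge1)
  show ?thesis
  proof (cases "I = \<infinity>")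
    case True
    then show ?thesis using q by (simp add: Lp_norm_def I_def Let_def)
  next
    case False
    have "enn2real (ennreal Y) \<le> enn2real I"
      by (rule enn2real_mono) (use le False in \<open>auto simp: I_def less_top\<close>)
    then have "Y \<le> enn2real I" using Y by simp
    then have "Y powr (1 / enn2real q) \<le> enn2real I powr (1 / enn2real q)"
      using Y q1 by (intro powr_mono2) auto
    then show ?thesis using q False by (simp add: Lp_norm_def I_def Let_def ennreal_leI)
  qed
qed

lemma Lp_lower_set:
  fixes h :: "'a::euclidean_space \<Rightarrow> 'b::real_normed_vector"
  assumes q: "1 \<le> q" and F: "F \<in> sets lebesgue" and c: "c \<ge> 0"
    and bd: "\<And>x. x \<in> F \<Longrightarrow> c \<le> norm (h x)"
  shows "ennreal (c * measure lebesgue F powr ia q) \<le> Lp_norm q h"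
proof (cases "measure lebesgue F = 0")
  case True
  then show ?thesis by simp
next
  case mF: False
  then have "emeasure lebesgue F \<noteq> \<infinity>" by (auto simp: measure_def)
  then have Ffin: "emeasure lebesgue F < \<infinity>" by (simp add: less_top)
  show ?thesis
  proof (cases "q = \<infinity>")
    case True
    have "ennreal c \<le> esssup lebesgue (\<lambda>x. ennreal (norm (h x)))"
    proof (rule ccontr)
      assume "\<not> ?thesis"
      then have lt: "esssup lebesgue (\<lambda>x. ennreal (norm (h x))) < ennreal c" by simp
      have "AE x in lebesgue. x \<notin> F"
        using esssup_AE[of "\<lambda>x. ennreal (norm (h x))" lebesgue]
      proof eventually_elim
        case (elim x)
        show ?case
        proof
          assume "x \<in> F"
          then have "ennreal c \<le> ennreal (norm (h x))" using bd by (auto intro: ennreal_leI)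
          also have "\<dots> \<le> esssup lebesgue (\<lambda>x. ennreal (norm (h x)))" by (rule elim)
          also have "\<dots> < ennreal c" by (rule lt)
          finally show False by simp
        qed
      qed
      then have "F \<in> null_sets lebesgue" using F by (simp add: AE_iff_null_sets)
      then show False using mF by (auto simp: measure_def dest: null_setsD1)
    qed
    moreover have "measure lebesgue F powr ia q = 1" using mF True by (simp add: ia_def)
    ultimately show ?thesis using True by (simp add: Lp_norm_def)
  next
    case False
    define qr where "qr = enn2real q"
    have q1: "1 \<le> qr" unfolding qr_def using q False by (rule enn2real_ge1)
    have "ennreal (c powr qr * measure lebesgue F) = ennreal (c powr qr) * ennreal (measure lebesgue F)"
      by (rule ennreal_mult) auto
    also have "\<dots> = ennreal (c powr qr) * emeasure lebesgue F"
      using emeasure_eq_ennreal_measure[of lebesgue F] Ffin by simp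
    also have "\<dots> = (\<integral>\<^sup>+ x. ennreal (c powr qr) * indicator F x \<partial>lebesgue)"
      using F by (simp add: nn_integral_cmult_indicator)
    also have "\<dots> \<le> (\<integral>\<^sup>+ x. ennreal (norm (h x) powr qr) \<partial>lebesgue)"
    proof (rule nn_integral_mono)
      fix x show "ennreal (c powr qr) * indicator F x \<le> ennreal (norm (h x) powr qr)"
      proof (cases "x \<in> F")
        case True
        then have "c powr qr \<le> norm (h x) powr qr" using bd c q1 by (intro powr_mono2) auto
        then show ?thesis using True by (auto intro: ennreal_leI)
      qed simp
    qed
    finally have le: "ennreal (c powr qr * measure lebesgue F) \<le> (\<integral>\<^sup>+ x. ennreal (norm (h x) powr qr) \<partial>lebesgue)" .
    have "ennreal ((c powr qr * measure lebesgue F) powr (1 / qr)) \<le> Lp_norm q h"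
      unfolding qr_def by (rule Lp_lower_fin[OF q False _ le[unfolded qr_def]]) simp
    moreover have "(c powr qr * measure lebesgue F) powr (1 / qr) = (c powr qr) powr (1/qr) * measure lebesgue F powr (1 / qr)"
      by (rule powr_mult; simp)
    moreover have "(c powr qr) powr (1/qr) = c" using q1 c by (simp add: powr_powr)
    moreover have "1 / qr = ia q" using False by (simp add: ia_def qr_def)
    ultimately show ?thesis by simp
  qed
qed

definition HypW :: "ennreal \<Rightarrow> ennreal \<Rightarrow> ('a::euclidean_space \<Rightarrow> real) \<Rightarrow> real \<Rightarrow> bool" where
  "HypW p q w C \<longleftrightarrow> (\<forall>f :: 'a \<Rightarrow> complex.
           integrable lebesgue f \<and> Lp_norm p (\<lambda>x. w x *\<^sub>R f x) < \<infinity> \<longrightarrow>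
           Lp_norm q (\<lambda>x. w x *\<^sub>R fourier f x) \<le> ennreal C * Lp_norm p (\<lambda>x. w x *\<^sub>R f x))"

lemma lmeas_sub_cball: "E \<in> sets lebesgue \<Longrightarrow> E \<subseteq> cball c r \<Longrightarrow> E \<in> lmeasurable"
  by (rule fmeasurableI2[OF lmeasurable_cball])

lemma master:
  fixes w :: "'a::euclidean_space \<Rightarrow> real"
  assumes p: "1 \<le> p" and q: "1 \<le> q" and wm: "w \<in> borel_measurable lebesgue"
    and C: "C > 0" and H: "HypW p q w C"
    and E: "E \<in> sets lebesgue" "E \<subseteq> cball c r" "r > 0" "\<And>x. x \<in> E \<Longrightarrow> \<bar>w x\<bar> \<le> K" and K: "K \<ge> 0"
    and F: "F \<in> sets lebesgue" "F \<subseteq> cball b0 (1/(8*r))" "\<And>x. x \<in> F \<Longrightarrow> \<eta> \<le> \<bar>w x\<bar>" "\<eta> \<ge> 0"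
  shows "\<eta> * (measure lebesgue E / 2) * measure lebesgue F powr ia q \<le> C * (K * measure lebesgue E powr ia p)"
proof -
  have El: "E \<in> lmeasurable" using E(1,2) by (rule lmeas_sub_cball)
  then have Efin: "emeasure lebesgue E < \<infinity>" using fmeasurableD2[OF El] by (simp add: less_top)
  define f where "f t = cis (2*pi*(b0 \<bullet> t)) * complex_of_real (indicator E t)" for t
  have fi: "integrable lebesgue f" unfolding f_def
    by (rule integrable_cind[OF E(1) Efin]) auto
  have wfm: "(\<lambda>x. w x *\<^sub>R f x) \<in> borel_measurable lebesgue"
    unfolding f_def using wm E(1) by measurable
  have bd: "AE x in lebesgue. norm (w x *\<^sub>R f x) \<le> K * indicator E x"
  proof (rule AE_I2)
    fix x show "norm (w x *\<^sub>R f x) \<le> K * indicator E x"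
      using E(4)[of x] by (cases "x \<in> E") (auto simp: f_def norm_mult)
  qed
  have up: "Lp_norm p (\<lambda>x. w x *\<^sub>R f x) \<le> ennreal (K * measure lebesgue E powr ia p)"
    by (rule Lp_upper[OF p wfm E(1) Efin K bd])
  have fin: "Lp_norm p (\<lambda>x. w x *\<^sub>R f x) < \<infinity>"
    by (rule le_less_trans[OF up]) simp
  have "Lp_norm q (\<lambda>x. w x *\<^sub>R fourier f x) \<le> ennreal C * Lp_norm p (\<lambda>x. w x *\<^sub>R f x)"
    using HypW_def[THEN iffD1, OF H, rule_format, OF conjI[OF fi fin]] .
  also have "\<dots> \<le> ennreal C * ennreal (K * measure lebesgue E powr ia p)"
    by (rule mult_left_mono[OF up]) simp
  also have "\<dots> = ennreal (C * (K * measure lebesgue E powr ia p))"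
    by (rule ennreal_mult[symmetric]) (use C K in auto)
  finally have U: "Lp_norm q (\<lambda>x. w x *\<^sub>R fourier f x) \<le> ennreal (C * (K * measure lebesgue E powr ia p))" .
  have lowF: "\<eta> * (measure lebesgue E / 2) \<le> norm (w x *\<^sub>R fourier f x)" if "x \<in> F" for x
  proof -
    have "dist x b0 \<le> 1/(8*r)" using F(2) that by (auto simp: dist_commute)
    then have "measure lebesgue E / 2 \<le> norm (fourier f x)"
      unfolding f_def by (rule ft_lower[OF E(1) E(2) Efin E(3)])
    then have "\<eta> * (measure lebesgue E / 2) \<le> \<bar>w x\<bar> * norm (fourier f x)"
      using F(3)[OF that] F(4) by (intro mult_mono) auto
    then show ?thesis by simp
  qed
  have L: "ennreal (\<eta> * (measure lebesgue E / 2) * measure lebesgue F powr ia q) \<le> Lp_norm q (\<lambda>x. w x *\<^sub>R fourier f x)"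
    by (rule Lp_lower_set[OF q F(1) _ lowF]) (use F(4) in auto)
  from L U have "ennreal (\<eta> * (measure lebesgue E / 2) * measure lebesgue F powr ia q) \<le> ennreal (C * (K * measure lebesgue E powr ia p))"
    by (rule order.trans)
  moreover have "0 \<le> C * (K * measure lebesgue E powr ia p)" using C K by simp
  ultimately show ?thesis by (simp only: ennreal_le_iff)
qed

lemma emeas_lm: "A \<in> lmeasurable \<Longrightarrow> emeasure lebesgue A = ennreal (measure lebesgue A)"
  by (rule emeasure_eq_ennreal_measure[OF fmeasurableD2])

lemma dens_null_bounded:
  fixes B :: "'a::euclidean_space set"
  assumes B: "B \<in> sets lebesgue" "B \<subseteq> ball 0 k" and th: "0 \<le> \<theta>" "\<theta> < 1"
    and H: "\<And>x r. x \<in> B \<Longrightarrow> r > 0 \<Longrightarrow> \<exists>d. 0 < d \<and> d \<le> r \<and> measure lebesgue (B \<inter> ball x d) \<le> \<theta> * measure lebesgue (ball x d)"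
  shows "B \<in> null_sets lebesgue"
proof -
  have Bl: "B \<in> lmeasurable" using B by (intro bounded_set_imp_lmeasurable) (auto intro: bounded_subset)
  have key: "measure lebesgue B \<le> \<theta> * (measure lebesgue B + e)" if e: "e > 0" for e
  proof -
    obtain T where T: "open T" "B \<subseteq> T" "(T - B) \<in> lmeasurable" "emeasure lebesgue (T - B) < ennreal e"
      using sets_lebesgue_outer_open[OF B(1) e] by blast
    define U where "U = T \<inter> ball 0 k"
    have U: "open U" "B \<subseteq> U" "U \<in> lmeasurable"
      using T B by (auto simp: U_def intro!: bounded_set_imp_lmeasurable bounded_Int)
    have "U \<subseteq> B \<union> (T - B)" by (auto simp: U_def)
    then have "measure lebesgue U \<le> measure lebesgue (B \<union> (T - B))"
      using U fmeasurable.Un[OF Bl T(3)] by (intro measure_mono_fmeasurable) (auto simp del: Un_Diff_cancel)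
    also have "\<dots> \<le> measure lebesgue B + measure lebesgue (T - B)"
      using Bl T by (intro measure_Un_le) auto
    also have "measure lebesgue (T - B) \<le> e"
    proof -
      have "emeasure lebesgue (T - B) = ennreal (measure lebesgue (T - B))"
        using T(3) by (rule emeas_lm)
      then show ?thesis using T(4) e by (simp add: ennreal_less_iff less_imp_le)
    qed
    finally have mU: "measure lebesgue U \<le> measure lebesgue B + e" by simp
    define KK where "KK = {(x, d). x \<in> B \<and> 0 < d \<and> ball x d \<subseteq> U \<and>
        measure lebesgue (B \<inter> ball x d) \<le> \<theta> * measure lebesgue (ball x d)}"
    have fine: "\<exists>i. i \<in> KK \<and> x \<in> ball (fst i) (snd i) \<and> snd i < d0" if xB: "x \<in> B" and d0: "0 < d0" for x d0
    proof -
      have "x \<in> U" using U(2) xB by blast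
      then obtain \<rho> where \<rho>: "\<rho> > 0" "ball x \<rho> \<subseteq> U" using U(1) openE by metis
      obtain d where d: "0 < d" "d \<le> min \<rho> (d0/2)" "measure lebesgue (B \<inter> ball x d) \<le> \<theta> * measure lebesgue (ball x d)"
        using H[OF xB, of "min \<rho> (d0/2)"] \<rho> d0 by auto
      have "ball x d \<subseteq> ball x \<rho>" using d by (intro ball_subset_ball_iff[THEN iffD2]) auto
      then have "ball x d \<subseteq> U" using \<rho> by blast
      then show ?thesis using d xB d0 by (intro exI[of _ "(x,d)"]) (auto simp: KK_def)
    qed
    obtain CC where CC: "countable CC" "CC \<subseteq> KK"
      "pairwise (\<lambda>i j. disjnt (ball (fst i) (snd i)) (ball (fst j) (snd j))) CC"
      "negligible (B - (\<Union>i\<in>CC. ball (fst i) (snd i)))"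
      using Vitali_covering_theorem_balls[of B KK fst snd, OF fine] by blast
    define X where "X i = B \<inter> ball (fst i) (snd i)" for i
    have dj: "disjoint_family_on X CC"
      using CC(3) unfolding disjoint_family_on_def pairwise_def disjnt_def X_def by blast
    have djb: "disjoint_family_on (\<lambda>i. ball (fst i) (snd i)) CC"
      using CC(3) unfolding disjoint_family_on_def pairwise_def disjnt_def by blast
    have Xs: "X i \<in> sets lebesgue" for i unfolding X_def by (intro sets.Int B(1) fmeasurableD[OF lmeasurable_ball])
    have N: "B - (\<Union>i\<in>CC. ball (fst i) (snd i)) \<in> null_sets lebesgue"
      using CC(4) by (simp add: negligible_iff_null_sets)
    have UX: "\<Union>(X ` CC) \<in> sets lebesgue" by (rule sets.countable_UN'[OF CC(1)]) (use Xs in auto)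
    have "B \<subseteq> (\<Union>(X ` CC)) \<union> (B - (\<Union>i\<in>CC. ball (fst i) (snd i)))" by (auto simp: X_def)
    then have "emeasure lebesgue B \<le> emeasure lebesgue ((\<Union>(X ` CC)) \<union> (B - (\<Union>i\<in>CC. ball (fst i) (snd i))))"
      by (intro emeasure_mono sets.Un UX null_setsD2[OF N])
    also have "\<dots> = emeasure lebesgue (\<Union>(X ` CC))"
      by (rule emeasure_Un_null_set) (use CC(1) Xs N in auto)
    also have "\<dots> = (\<integral>\<^sup>+i. emeasure lebesgue (X i) \<partial>count_space CC)"
      by (rule emeasure_UN_countable[OF _ CC(1) dj]) (rule Xs)
    also have "\<dots> \<le> (\<integral>\<^sup>+i. ennreal \<theta> * emeasure lebesgue (ball (fst i) (snd i)) \<partial>count_space CC)"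
    proof (rule nn_integral_mono)
      fix i assume "i \<in> space (count_space CC)"
      then have "i \<in> KK" using CC(2) by auto
      then have le: "measure lebesgue (X i) \<le> \<theta> * measure lebesgue (ball (fst i) (snd i))"
        by (cases i) (auto simp: KK_def X_def)
      have "X i \<in> lmeasurable" unfolding X_def by (rule fmeasurableI2[OF lmeasurable_ball]) (use B in auto)
      then have "emeasure lebesgue (X i) = ennreal (measure lebesgue (X i))"
        by (rule emeas_lm)
      also have "\<dots> \<le> ennreal (\<theta> * measure lebesgue (ball (fst i) (snd i)))"
        using le by (rule ennreal_leI)
      also have "\<dots> = ennreal \<theta> * ennreal (measure lebesgue (ball (fst i) (snd i)))"
        by (rule ennreal_mult) (use th in auto)
      also have "ennreal (measure lebesgue (ball (fst i) (snd i))) = emeasure lebesgue (ball (fst i) (snd i))"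
        by (rule emeas_lm[symmetric]) simp
      finally show "emeasure lebesgue (X i) \<le> ennreal \<theta> * emeasure lebesgue (ball (fst i) (snd i))" .
    qed
    also have "\<dots> = ennreal \<theta> * (\<integral>\<^sup>+i. emeasure lebesgue (ball (fst i) (snd i)) \<partial>count_space CC)"
      by (rule nn_integral_cmult) simp
    also have "(\<integral>\<^sup>+i. emeasure lebesgue (ball (fst i) (snd i)) \<partial>count_space CC) = emeasure lebesgue (\<Union>i\<in>CC. ball (fst i) (snd i))"
      by (rule emeasure_UN_countable[OF _ CC(1) djb, symmetric]) simp
    also have "(\<Union>i\<in>CC. ball (fst i) (snd i)) \<subseteq> U"
    proof
      fix y assume "y \<in> (\<Union>i\<in>CC. ball (fst i) (snd i))"
      then obtain i where i: "i \<in> CC" "y \<in> ball (fst i) (snd i)" by blast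
      have "i \<in> KK" using CC(2) i(1) by blast
      then have "ball (fst i) (snd i) \<subseteq> U" by (cases i) (auto simp: KK_def)
      then show "y \<in> U" using i by blast
    qed
    then have "emeasure lebesgue (\<Union>i\<in>CC. ball (fst i) (snd i)) \<le> emeasure lebesgue U"
      by (rule emeasure_mono) (use U in auto)
    then have "ennreal \<theta> * emeasure lebesgue (\<Union>i\<in>CC. ball (fst i) (snd i)) \<le> ennreal \<theta> * emeasure lebesgue U"
      by (rule mult_left_mono) simp
    also have "emeasure lebesgue U = ennreal (measure lebesgue U)"
      using U(3) by (rule emeas_lm)
    finally have "emeasure lebesgue B \<le> ennreal \<theta> * ennreal (measure lebesgue U)" .
    also have "\<dots> = ennreal (\<theta> * measure lebesgue U)" by (rule ennreal_mult[symmetric]) (use th in auto)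
    finally have "ennreal (measure lebesgue B) \<le> ennreal (\<theta> * measure lebesgue U)"
      using emeas_lm[OF Bl] by simp
    then have "measure lebesgue B \<le> \<theta> * measure lebesgue U"
      by (subst (asm) ennreal_le_iff) (use th in auto)
    also have "\<dots> \<le> \<theta> * (measure lebesgue B + e)" using mU th by (intro mult_left_mono) auto
    finally show ?thesis .
  qed
  have "measure lebesgue B \<le> 0"
  proof (rule ccontr)
    assume "\<not> ?thesis"
    then have pos: "measure lebesgue B > 0" by simp
    define e where "e = (1 - \<theta>) * measure lebesgue B / 2"
    have e: "e > 0" using pos th by (simp add: e_def)
    have "measure lebesgue B \<le> \<theta> * (measure lebesgue B + e)" by (rule key[OF e])
    also have "\<dots> \<le> \<theta> * measure lebesgue B + e" using th e by (simp add: algebra_simps mult_left_le_one_le)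
    finally have "(1 - \<theta>) * measure lebesgue B \<le> e" by (simp add: algebra_simps)
    then show False using e pos th by (simp add: e_def)
  qed
  then have "measure lebesgue B = 0" using measure_nonneg[of lebesgue B] by linarith
  then show ?thesis using emeas_lm[OF Bl] B(1) by (auto intro!: null_setsI)
qed


lemma lm_Int_ball: "A \<in> sets lebesgue \<Longrightarrow> A \<inter> ball x d \<in> lmeasurable"
  by (rule fmeasurableI2[OF lmeasurable_ball]) (auto intro: sets.Int fmeasurableD[OF lmeasurable_ball])

lemma dens_null:
  fixes A :: "'a::euclidean_space set"
  assumes A: "A \<in> sets lebesgue" and th: "0 \<le> \<theta>" "\<theta> < 1"
    and H: "\<And>x r. x \<in> A \<Longrightarrow> r > 0 \<Longrightarrow> \<exists>d. 0 < d \<and> d \<le> r \<and> measure lebesgue (A \<inter> ball x d) \<le> \<theta> * measure lebesgue (ball x d)"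
  shows "A \<in> null_sets lebesgue"
proof -
  have "A \<inter> ball 0 (real k) \<in> null_sets lebesgue" for k :: nat
  proof (rule dens_null_bounded[OF _ _ th])
    show "A \<inter> ball 0 (real k) \<in> sets lebesgue" using lm_Int_ball[OF A] by auto
    show "A \<inter> ball 0 (real k) \<subseteq> ball 0 (real k)" by auto
    fix x and r :: real assume x: "x \<in> A \<inter> ball 0 (real k)" and r: "0 < r"
    obtain d :: real where d: "0 < d" "d \<le> r" "measure lebesgue (A \<inter> ball x d) \<le> \<theta> * measure lebesgue (ball x d)"
      using H[of x r] x r by auto
    have "measure lebesgue (A \<inter> ball 0 (real k) \<inter> ball x d) \<le> measure lebesgue (A \<inter> ball x d)"
      by (rule measure_mono_fmeasurable) (use lm_Int_ball[OF A] lm_Int_ball[OF A, of 0 "real k"] in \<open>auto intro: sets.Int fmeasurableD[OF lmeasurable_ball]\<close>)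
    then show "\<exists>d. 0 < d \<and> d \<le> r \<and> measure lebesgue (A \<inter> ball 0 (real k) \<inter> ball x d) \<le> \<theta> * measure lebesgue (ball x d)"
      using d by (intro exI[of _ d]) auto
  qed
  then have "(\<Union>k::nat. A \<inter> ball 0 (real k)) \<in> null_sets lebesgue" by (rule null_sets_UN)
  moreover have "(\<Union>k::nat. A \<inter> ball 0 (real k)) = A"
  proof (intro equalityI subsetI)
    fix x assume "x \<in> A"
    obtain k :: nat where "norm x < real k" using reals_Archimedean2 by blast
    then show "x \<in> (\<Union>k::nat. A \<inter> ball 0 (real k))" using \<open>x \<in> A\<close> by auto
  qed auto
  ultimately show ?thesis by simp
qed

lemma dens_point:
  fixes S :: "'a::euclidean_space set"
  assumes S: "S \<in> sets lebesgue" "S \<notin> null_sets lebesgue"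
  obtains x and r e :: real where "r > 0" "e > 0"
    "\<And>d. 0 < d \<Longrightarrow> d \<le> r \<Longrightarrow> e * measure lebesgue (ball x d) \<le> measure lebesgue (S \<inter> ball x d)"
proof -
  have "\<not> negligible S" using S(2) by (simp add: negligible_iff_null_sets)
  then obtain x r e where xre: "x \<in> S" "r > 0" "e > 0"
    and N: "\<not> (\<exists>d::real. 0 < d \<and> d \<le> r \<and> (\<exists>U. S \<inter> ball x d \<subseteq> U \<and> U \<in> lmeasurable \<and> measure lebesgue U < e * measure lebesgue (ball x d)))"
    unfolding negligible_eq_zero_density by blast
  show ?thesis
  proof (rule that[OF xre(2) xre(3)])
    fix d assume d: "0 < d" "d \<le> r"
    show "e * measure lebesgue (ball x d) \<le> measure lebesgue (S \<inter> ball x d)"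
    proof (rule ccontr)
      assume "\<not> ?thesis"
      then have "measure lebesgue (S \<inter> ball x d) < e * measure lebesgue (ball x d)" by simp
      then show False using N d lm_Int_ball[OF S(1), of x d] by blast
    qed
  qed
qed

lemma sigma_finite_lebesgue: "sigma_finite_measure (lebesgue :: 'a::euclidean_space measure)"
proof
  show "\<exists>A. countable A \<and> A \<subseteq> sets (lebesgue :: 'a measure) \<and> \<Union> A = space lebesgue \<and> (\<forall>a\<in>A. emeasure lebesgue a \<noteq> \<infinity>)"
  proof (intro exI conjI)
    show "countable (range (\<lambda>n::nat. cball (0::'a) (real n)))" by simp
    show "range (\<lambda>n::nat. cball (0::'a) (real n)) \<subseteq> sets lebesgue" by auto
    show "\<Union> (range (\<lambda>n::nat. cball (0::'a) (real n))) = space lebesgue"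
    proof (auto)
      fix x :: 'a
      obtain k :: nat where "norm x \<le> real k" using real_arch_simple by blast
      then show "\<exists>n. norm x \<le> real n" by blast
    qed
    show "\<forall>a\<in>range (\<lambda>n::nat. cball (0::'a) (real n)). emeasure lebesgue a \<noteq> \<infinity>"
      using fmeasurableD2[OF lmeasurable_cball] by auto
  qed
qed

lemma fst_meas_LL[measurable]: "fst \<in> borel_measurable ((lebesgue :: 'a::euclidean_space measure) \<Otimes>\<^sub>M (lebesgue :: 'a measure))"
  using measurable_comp[OF measurable_fst id_borel_measurable_lebesgue] by (simp add: comp_def)

lemma snd_meas_LL[measurable]: "snd \<in> borel_measurable ((lebesgue :: 'a::euclidean_space measure) \<Otimes>\<^sub>M (lebesgue :: 'a measure))"
  using measurable_comp[OF measurable_snd id_borel_measurable_lebesgue] by (simp add: comp_def)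

lemma avg_lower:
  fixes G :: "'a::euclidean_space set"
  assumes G[measurable]: "G \<in> sets lebesgue" and al: "\<alpha> \<ge> 0"
    and H: "\<And>y. \<alpha> * measure lebesgue (ball y 1) \<le> measure lebesgue (G \<inter> ball y 1)" and R: "R \<ge> 1"
  shows "\<alpha> * measure lebesgue (ball b (R - 1)) \<le> measure lebesgue (G \<inter> ball b R)"
proof -
  interpret L: pair_sigma_finite "lebesgue :: 'a measure" "lebesgue :: 'a measure"
    by (intro pair_sigma_finite.intro sigma_finite_lebesgue)
  have GBs: "G \<inter> ball y r \<in> sets lebesgue" for y r using G by (intro sets.Int) auto
  have Bs: "ball y r \<inter> ball z t \<in> sets lebesgue" for y z :: 'a and r t by (intro sets.Int) auto
  define w1 where "w1 = measure lebesgue (ball (0::'a) 1)"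
  have w1: "measure lebesgue (ball y 1) = w1" for y :: 'a
    by (simp add: w1_def content_ball)
  have w1e: "emeasure lebesgue (ball y 1) = ennreal w1" for y :: 'a
    using emeasure_eq_ennreal_measure[OF fmeasurableD2[OF lmeasurable_ball]] w1 by metis
  define f where "f x y = indicator G x * indicator {p::'a\<times>'a. dist (fst p) (snd p) < 1} (x, y) * (indicator (ball b (R - 1)) y :: ennreal)" for x y
  have m1: "(\<lambda>p::'a\<times>'a. indicator G (fst p) :: ennreal) \<in> borel_measurable (lebesgue \<Otimes>\<^sub>M lebesgue)"
    by (rule measurable_compose[OF measurable_fst]) (simp add: borel_measurable_indicator)
  have m3: "(\<lambda>p::'a\<times>'a. indicator (ball b (R - 1)) (snd p) :: ennreal) \<in> borel_measurable (lebesgue \<Otimes>\<^sub>M lebesgue)"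
    by (rule measurable_compose[OF measurable_snd]) (simp add: borel_measurable_indicator)
  have md: "(\<lambda>p::'a\<times>'a. dist (fst p) (snd p)) \<in> borel_measurable (lebesgue \<Otimes>\<^sub>M lebesgue)"
    by (intro borel_measurable_dist fst_meas_LL snd_meas_LL)
  have m2': "(\<lambda>p::'a\<times>'a. indicator {..<1::real} (dist (fst p) (snd p)) :: ennreal) \<in> borel_measurable (lebesgue \<Otimes>\<^sub>M lebesgue)"
    by (rule measurable_compose[OF md]) (simp add: borel_measurable_indicator)
  have m2: "(\<lambda>p::'a\<times>'a. indicator {p::'a\<times>'a. dist (fst p) (snd p) < 1} p :: ennreal) \<in> borel_measurable (lebesgue \<Otimes>\<^sub>M lebesgue)"
    using m2' by (simp add: indicator_def)
  have fm: "case_prod f \<in> borel_measurable (lebesgue \<Otimes>\<^sub>M lebesgue)"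
  proof -
    have "case_prod f = (\<lambda>p. indicator G (fst p) * indicator {p::'a\<times>'a. dist (fst p) (snd p) < 1} p * (indicator (ball b (R - 1)) (snd p) :: ennreal))"
      by (auto simp: f_def fun_eq_iff)
    then show ?thesis using m1 m2 m3 by (simp add: borel_measurable_times)
  qed
  have inner1: "(\<integral>\<^sup>+ x. f x y \<partial>lebesgue) = emeasure lebesgue (G \<inter> ball y 1) * indicator (ball b (R - 1)) y" for y
  proof -
    have "(\<integral>\<^sup>+ x. f x y \<partial>lebesgue) = (\<integral>\<^sup>+ x. indicator (G \<inter> ball y 1) x * indicator (ball b (R - 1)) y \<partial>lebesgue)"
      by (intro nn_integral_cong) (auto simp: f_def indicator_def dist_commute)
    also have "\<dots> = emeasure lebesgue (G \<inter> ball y 1) * indicator (ball b (R - 1)) y"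
      by (subst nn_integral_multc) (auto simp: nn_integral_indicator GBs borel_measurable_indicator)
    finally show ?thesis .
  qed
  have inner2: "(\<integral>\<^sup>+ y. f x y \<partial>lebesgue) \<le> ennreal w1 * indicator (G \<inter> ball b R) x" for x
  proof -
    have "(\<integral>\<^sup>+ y. f x y \<partial>lebesgue) = (\<integral>\<^sup>+ y. indicator G x * indicator (ball x 1 \<inter> ball b (R - 1)) y \<partial>lebesgue)"
      by (intro nn_integral_cong) (auto simp: f_def indicator_def)
    also have "\<dots> = indicator G x * emeasure lebesgue (ball x 1 \<inter> ball b (R - 1))"
      by (subst nn_integral_cmult) (auto simp: nn_integral_indicator Bs borel_measurable_indicator)
    also have "\<dots> \<le> ennreal w1 * indicator (G \<inter> ball b R) x"
    proof (cases "x \<in> G \<inter> ball b R")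
      case True
      have "emeasure lebesgue (ball x 1 \<inter> ball b (R - 1)) \<le> emeasure lebesgue (ball x 1)"
        by (rule emeasure_mono) auto
      then show ?thesis using True w1e[of x] by (simp add: indicator_def)
    next
      case False
      show ?thesis
      proof (cases "x \<in> G")
        case True
        with False have "dist b x \<ge> R" by auto
        then have "ball x 1 \<inter> ball b (R - 1) = {}"
          by (auto simp: dist_commute) (metis dist_triangle add.commute diff_add_cancel add_strict_mono not_le order_less_le_trans dist_commute)
        then show ?thesis by simp
      qed (simp add: indicator_def)
    qed
    finally show ?thesis .
  qed
  have "ennreal (\<alpha> * w1) * emeasure lebesgue (ball b (R - 1)) = (\<integral>\<^sup>+ y. ennreal (\<alpha> * w1) * indicator (ball b (R - 1)) y \<partial>lebesgue)"
    by (simp add: nn_integral_cmult_indicator)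
  also have "\<dots> \<le> (\<integral>\<^sup>+ y. (\<integral>\<^sup>+ x. f x y \<partial>lebesgue) \<partial>lebesgue)"
  proof (rule nn_integral_mono)
    fix y
    have "ennreal (\<alpha> * w1) \<le> emeasure lebesgue (G \<inter> ball y 1)"
    proof -
      have "ennreal (\<alpha> * w1) \<le> ennreal (measure lebesgue (G \<inter> ball y 1))"
        using H[of y] w1[of y] by (intro ennreal_leI) simp
      also have "\<dots> = emeasure lebesgue (G \<inter> ball y 1)"
      proof -
        have "G \<inter> ball y 1 \<in> lmeasurable"
          by (rule fmeasurableI2[OF lmeasurable_ball]) auto
        then show ?thesis using emeasure_eq_ennreal_measure[OF fmeasurableD2] by metis
      qed
      finally show ?thesis .
    qed
    then show "ennreal (\<alpha> * w1) * indicator (ball b (R - 1)) y \<le> (\<integral>\<^sup>+ x. f x y \<partial>lebesgue)"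
      unfolding inner1 by (auto simp: indicator_def)
  qed
  also have "\<dots> = (\<integral>\<^sup>+ x. (\<integral>\<^sup>+ y. f x y \<partial>lebesgue) \<partial>lebesgue)"
    by (rule L.Fubini'[OF fm])
  also have "\<dots> \<le> (\<integral>\<^sup>+ x. ennreal w1 * indicator (G \<inter> ball b R) x \<partial>lebesgue)"
    by (rule nn_integral_mono) (rule inner2)
  also have "\<dots> = ennreal w1 * emeasure lebesgue (G \<inter> ball b R)"
    by (rule nn_integral_cmult_indicator) (rule GBs)
  finally have main: "ennreal (\<alpha> * w1) * emeasure lebesgue (ball b (R - 1)) \<le> ennreal w1 * emeasure lebesgue (G \<inter> ball b R)" .
  have GB: "G \<inter> ball b R \<in> lmeasurable" by (rule fmeasurableI2[OF lmeasurable_ball]) auto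
  have e1: "emeasure lebesgue (G \<inter> ball b R) = ennreal (measure lebesgue (G \<inter> ball b R))"
    using emeasure_eq_ennreal_measure[OF fmeasurableD2[OF GB]] .
  have e2: "emeasure lebesgue (ball b (R - 1)) = ennreal (measure lebesgue (ball b (R - 1)))"
    using emeasure_eq_ennreal_measure[OF fmeasurableD2[OF lmeasurable_ball]] .
  have w1p: "w1 > 0" unfolding w1_def by (simp add: content_ball_pos)
  have "ennreal (\<alpha> * w1 * measure lebesgue (ball b (R - 1))) \<le> ennreal (w1 * measure lebesgue (G \<inter> ball b R))"
    using main unfolding e1 e2 using al w1p by (simp add: ennreal_mult[symmetric])
  then have "\<alpha> * w1 * measure lebesgue (ball b (R - 1)) \<le> w1 * measure lebesgue (G \<inter> ball b R)"
    by (subst (asm) ennreal_le_iff) (use w1p in auto)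
  then show ?thesis using w1p by (simp add: mult.commute mult.left_commute)
qed

lemma exp_small:
  fixes s M d0 :: real
  assumes d0: "d0 > 0" and H: "\<And>d. 0 < d \<Longrightarrow> d \<le> d0 \<Longrightarrow> d powr s \<le> M"
  shows "s \<ge> 0"
proof (rule ccontr)
  assume "\<not> s \<ge> 0" then have s: "s < 0" by simp
  define M2 where "M2 = \<bar>M\<bar> + 1"
  have M2: "M2 > 0" "M2 > M" by (auto simp: M2_def)
  define d where "d = min d0 (M2 powr (1/s))"
  have dpos: "d > 0" using d0 M2 by (simp add: d_def)
  have "(M2 powr (1/s)) powr s \<le> d powr s"
    by (rule powr_mono2') (use s dpos in \<open>auto simp: d_def\<close>)
  moreover have "(M2 powr (1/s)) powr s = M2" using s M2 by (simp add: powr_powr)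
  moreover have "d powr s \<le> M" using H[OF dpos] by (simp add: d_def)
  ultimately show False using M2 by linarith
qed

lemma exp_large:
  fixes s M R0 :: real
  assumes H: "\<And>R. R \<ge> R0 \<Longrightarrow> R powr s \<le> M"
  shows "s \<le> 0"
proof (rule ccontr)
  assume "\<not> s \<le> 0" then have s: "s > 0" by simp
  define M2 where "M2 = \<bar>M\<bar> + 1"
  have M2: "M2 > 0" "M2 > M" by (auto simp: M2_def)
  define R where "R = max (max R0 1) (M2 powr (1/s))"
  have Rpos: "R > 0" by (simp add: R_def)
  have "(M2 powr (1/s)) powr s \<le> R powr s"
    by (rule powr_mono2) (use s in \<open>auto simp: R_def\<close>)
  moreover have "(M2 powr (1/s)) powr s = M2" using s M2 by (simp add: powr_powr)
  moreover have "R powr s \<le> M" using H by (simp add: R_def)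
  ultimately show False using M2 by linarith
qed

lemma nonnull_level:
  assumes S: "S \<in> sets lebesgue" "S \<notin> null_sets lebesgue"
    and T: "\<And>k::nat. T k \<in> sets lebesgue" and cov: "S \<subseteq> (\<Union>k. T k)"
  shows "\<exists>k. S \<inter> T k \<notin> null_sets lebesgue"
proof (rule ccontr)
  assume "\<not> ?thesis"
  then have "\<And>k. S \<inter> T k \<in> null_sets lebesgue" by blast
  then have "(\<Union>k. S \<inter> T k) \<in> null_sets lebesgue" by (rule null_sets_UN)
  moreover have "(\<Union>k. S \<inter> T k) = S" using cov by blast
  ultimately show False using S by simp
qed

lemma ball_nonnull: "r > 0 \<Longrightarrow> ball (x::'a::euclidean_space) r \<notin> null_sets lebesgue"
  using emeasure_eq_ennreal_measure[OF fmeasurableD2[OF lmeasurable_ball[of x r]]] content_ball_pos[of r x]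
  by (auto simp: null_sets_def)

lemma nonnull_meas_pos: "S \<in> lmeasurable \<Longrightarrow> S \<notin> null_sets lebesgue \<Longrightarrow> measure lebesgue S > 0"
  using emeasure_eq_ennreal_measure[OF fmeasurableD2[of S lebesgue]]
  by (metis ennreal_0 fmeasurableD measure_nonneg null_setsI order_le_less)

lemma fourier_meas:
  fixes g :: "'a::euclidean_space \<Rightarrow> complex"
  assumes g: "g \<in> borel_measurable lebesgue"
  shows "fourier g \<in> borel_measurable lebesgue"
proof -
  interpret L: sigma_finite_measure "lebesgue :: 'a measure" by (rule sigma_finite_lebesgue)
  have ip: "(\<lambda>p::'a\<times>'a. fst p \<bullet> snd p) \<in> borel_measurable (lebesgue \<Otimes>\<^sub>M lebesgue)"
    by (intro borel_measurable_inner fst_meas_LL snd_meas_LL)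
  have cc: "(\<lambda>r::real. cis (- 2 * pi * r)) \<in> borel_measurable borel"
    by (intro borel_measurable_continuous_onI continuous_intros)
  have c1: "(\<lambda>p::'a\<times>'a. cis (- 2 * pi * (fst p \<bullet> snd p))) \<in> borel_measurable (lebesgue \<Otimes>\<^sub>M lebesgue)"
    using measurable_compose[OF ip cc] by simp
  have c2: "(\<lambda>p::'a\<times>'a. g (snd p)) \<in> borel_measurable (lebesgue \<Otimes>\<^sub>M lebesgue)"
    by (rule measurable_compose[OF measurable_snd g])
  have "case_prod (\<lambda>x t. cis (- 2 * pi * (x \<bullet> t)) * g t) \<in> borel_measurable (lebesgue \<Otimes>\<^sub>M lebesgue)"
    using borel_measurable_times[OF c1 c2] by (simp add: case_prod_beta')
  then have "(\<lambda>x. \<integral>t. cis (- 2 * pi * (x \<bullet> t)) * g t \<partial>lebesgue) \<in> borel_measurable lebesgue"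
    by (rule L.borel_measurable_lebesgue_integral)
  then show ?thesis unfolding fourier_def[abs_def] .
qed

lemma pair_sum:
  fixes z :: "nat \<Rightarrow> complex" and qr :: real
  assumes k: "k < N" and qr: "qr \<ge> 1"
  defines "Th \<equiv> PiE {..<N} (\<lambda>_. {-1::real, 1})"
  shows "(\<Sum>th\<in>Th. norm (\<Sum>j<N. complex_of_real (th j) * z j) powr qr) \<ge> real (card Th) * norm (z k) powr qr / 2"
proof -
  define sg where "sg th = (\<lambda>j. if j < N \<and> j \<noteq> k then - th j else th j)" for th :: "nat \<Rightarrow> real"
  define g where "g th = norm (\<Sum>j<N. complex_of_real (th j) * z j) powr qr" for th
  have sgTh: "sg th \<in> Th" if "th \<in> Th" for th
    using that unfolding Th_def sg_def PiE_def Pi_def extensional_def by auto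
  have sgsg: "sg (sg th) = th" for th by (auto simp: sg_def fun_eq_iff)
  have re: "(\<Sum>th\<in>Th. g (sg th)) = (\<Sum>th\<in>Th. g th)"
    by (rule sum.reindex_bij_witness[of _ sg sg]) (auto simp: sgTh sgsg)
  have pw: "g th + g (sg th) \<ge> norm (z k) powr qr" if th: "th \<in> Th" for th
  proof -
    have thk: "th k = -1 \<or> th k = 1" using th k unfolding Th_def by auto
    define u where "u = complex_of_real (th k) * z k"
    define R where "R = (\<Sum>j\<in>{..<N} - {k}. complex_of_real (th j) * z j)"
    have nu: "norm u = norm (z k)" using thk by (auto simp: u_def norm_mult)
    have s1: "(\<Sum>j<N. complex_of_real (th j) * z j) = u + R"
      using k unfolding u_def R_def by (subst sum.remove[of _ k]) auto
    have s2: "(\<Sum>j<N. complex_of_real (sg th j) * z j) = u - R"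
    proof -
      have "(\<Sum>j<N. complex_of_real (sg th j) * z j) = complex_of_real (sg th k) * z k + (\<Sum>j\<in>{..<N} - {k}. complex_of_real (sg th j) * z j)"
        using k by (subst sum.remove[of _ k]) auto
      also have "(\<Sum>j\<in>{..<N} - {k}. complex_of_real (sg th j) * z j) = - R"
        unfolding R_def by (simp add: sum_negf[symmetric] sg_def)
      finally show ?thesis by (simp add: sg_def u_def)
    qed
    have "2 * norm u \<le> norm (u + R) + norm (u - R)"
      using norm_triangle_ineq[of "u + R" "u - R"] by simp
    then have "norm u \<le> max (norm (u + R)) (norm (u - R))" by linarith
    then have "norm u powr qr \<le> max (norm (u + R)) (norm (u - R)) powr qr"
      using qr by (intro powr_mono2) auto
    also have "\<dots> \<le> norm (u + R) powr qr + norm (u - R) powr qr"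
      by (cases "norm (u + R) \<le> norm (u - R)") (auto simp: max_def)
    finally show ?thesis using s1 s2 nu by (simp add: g_def)
  qed
  have "real (card Th) * norm (z k) powr qr = (\<Sum>th\<in>Th. norm (z k) powr qr)" by simp
  also have "\<dots> \<le> (\<Sum>th\<in>Th. g th + g (sg th))" by (rule sum_mono) (rule pw)
  also have "\<dots> = 2 * (\<Sum>th\<in>Th. g th)" by (simp add: sum.distrib re)
  finally show ?thesis by (simp add: g_def)
qed

lemma ia_bounds: assumes "1 \<le> p" shows "0 \<le> ia p" "ia p \<le> 1"
proof -
  show "0 \<le> ia p" by (simp add: ia_def)
  show "ia p \<le> 1"
  proof (cases "p = \<infinity>")
    case False
    then have "1 \<le> enn2real p" using enn2real_ge1[OF assms] by simp
    then show ?thesis using False by (simp add: ia_def)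
  qed (simp add: ia_def)
qed

lemma cancel_aux: "(C::real) \<noteq> 0 \<Longrightarrow> X \<noteq> 0 \<Longrightarrow> C * (Y / (8 * C * X) * X) = Y / 8"
  by (simp add: field_simps)

lemma meas_ball_eq: "measure lebesgue (ball (y::'a::euclidean_space) r) = measure lebesgue (ball (0::'a) r)"
  by (cases "r \<ge> 0") (simp_all add: content_ball ball_empty)

lemma sub_ball_lm: "S \<in> sets lebesgue \<Longrightarrow> S \<subseteq> ball y r \<Longrightarrow> S \<in> lmeasurable"
  by (rule fmeasurableI2[OF lmeasurable_ball])

locale HY =
  fixes p q :: ennreal and w :: "'a::euclidean_space \<Rightarrow> real" and C :: real
  assumes p: "1 \<le> p" and q: "1 \<le> q" and wm: "w \<in> borel_measurable lebesgue"
    and wpos: "\<And>x. 0 < w x" and C: "0 < C" and H: "HypW p q w C"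
begin

abbreviation "ap \<equiv> ia p"
abbreviation "bq \<equiv> ia q"

lemma ap: "0 \<le> ap" "ap \<le> 1" using ia_bounds[OF p] by auto
lemma bq: "0 \<le> bq" "bq \<le> 1" using ia_bounds[OF q] by auto

lemma sets_lt: "{x. w x < c} \<in> sets lebesgue"
  using lebesgue_measurable_vimage_borel[OF wm, of "{..<c}"] by simp
lemma sets_le: "{x. w x \<le> c} \<in> sets lebesgue"
  using lebesgue_measurable_vimage_borel[OF wm, of "{..c}"] by simp
lemma sets_gt: "{x. c < w x} \<in> sets lebesgue"
  using lebesgue_measurable_vimage_borel[OF wm, of "{c<..}"] by simp
lemma sets_ge: "{x. c \<le> w x} \<in> sets lebesgue"
  using lebesgue_measurable_vimage_borel[OF wm, of "{c..}"] by simp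

lemma sets_Int_ball: "S \<in> sets lebesgue \<Longrightarrow> S \<inter> ball y r \<in> sets lebesgue"
  by (intro sets.Int) auto

lemma M:
  assumes "E \<in> sets lebesgue" "E \<subseteq> cball c r" "r > 0" "\<And>x. x \<in> E \<Longrightarrow> w x \<le> K" "K \<ge> 0"
    "F \<in> sets lebesgue" "F \<subseteq> cball b0 (1/(8*r))" "\<And>x. x \<in> F \<Longrightarrow> \<eta> \<le> w x" "\<eta> \<ge> 0"
  shows "\<eta> * (measure lebesgue E / 2) * measure lebesgue F powr bq \<le> C * (K * measure lebesgue E powr ap)"
proof (rule master[OF p q wm C H assms(1,2,3) _ assms(5,6,7) _ assms(9)])
  fix x assume "x \<in> E" then show "\<bar>w x\<bar> \<le> K" using assms(4) wpos[of x] by simp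
next
  fix x assume "x \<in> F" then show "\<eta> \<le> \<bar>w x\<bar>" using assms(8) wpos[of x] by simp
qed

lemma lev_eta1: obtains \<eta>1 where "\<eta>1 > 0" "{x. \<eta>1 \<le> w x} \<inter> ball 0 (1/8) \<notin> null_sets lebesgue"
proof -
  have "\<exists>k. ball (0::'a) (1/8) \<inter> {x. 1 / (real k + 1) \<le> w x} \<notin> null_sets lebesgue"
  proof (rule nonnull_level)
    show "ball (0::'a) (1/8) \<in> sets lebesgue" by simp
    show "ball (0::'a) (1/8) \<notin> null_sets lebesgue" by (rule ball_nonnull) simp
    show "{x. 1 / (real k + 1) \<le> w x} \<in> sets lebesgue" for k by (rule sets_ge)
    show "ball (0::'a) (1/8) \<subseteq> (\<Union>k. {x. 1 / (real k + 1) \<le> w x})"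
    proof
      fix x :: 'a
      obtain n where "inverse (real (Suc n)) < w x" using reals_Archimedean[OF wpos[of x]] by blast
      then have "1 / (real n + 1) \<le> w x" by (simp add: field_simps)
      then show "x \<in> (\<Union>k. {x. 1 / (real k + 1) \<le> w x})" by blast
    qed
  qed
  then obtain k where "ball (0::'a) (1/8) \<inter> {x. 1 / (real k + 1) \<le> w x} \<notin> null_sets lebesgue" by blast
  then show ?thesis by (intro that[of "1 / (real k + 1)"]) (auto simp: Int_commute)
qed

lemma lev_K1: obtains K1 where "K1 \<ge> 0" "{x. w x \<le> K1} \<inter> ball 0 (1/8) \<notin> null_sets lebesgue"
proof -
  have "\<exists>k. ball (0::'a) (1/8) \<inter> {x. w x \<le> real k} \<notin> null_sets lebesgue"
  proof (rule nonnull_level)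
    show "ball (0::'a) (1/8) \<in> sets lebesgue" by simp
    show "ball (0::'a) (1/8) \<notin> null_sets lebesgue" by (rule ball_nonnull) simp
    show "{x. w x \<le> real k} \<in> sets lebesgue" for k by (rule sets_le)
    show "ball (0::'a) (1/8) \<subseteq> (\<Union>k. {x. w x \<le> real k})"
    proof
      fix x :: 'a
      obtain n where "w x \<le> real n" using real_arch_simple by blast
      then show "x \<in> (\<Union>k. {x. w x \<le> real k})" by blast
    qed
  qed
  then obtain k where "ball (0::'a) (1/8) \<inter> {x. w x \<le> real k} \<notin> null_sets lebesgue" by blast
  then show ?thesis by (intro that[of "real k"]) (auto simp: Int_commute)
qed

definition om :: real where "om = measure lebesgue (ball (0::'a) 1)"

lemma om_pos: "om > 0" unfolding om_def by (simp add: content_ball_pos)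
lemma om_ball: "measure lebesgue (ball (y::'a) 1) = om" unfolding om_def by (rule meas_ball_eq)

lemma step2: obtains \<eta>0 where "\<eta>0 > 0" "\<And>y. measure lebesgue (ball y 1) / 2 \<le> measure lebesgue ({x. \<eta>0 \<le> w x} \<inter> ball y 1)"
proof -
  obtain \<eta>1 where \<eta>1: "\<eta>1 > 0" "{x. \<eta>1 \<le> w x} \<inter> ball 0 (1/8) \<notin> null_sets lebesgue" by (rule lev_eta1)
  define F1 where "F1 = {x. \<eta>1 \<le> w x} \<inter> ball (0::'a) (1/8)"
  have F1s: "F1 \<in> sets lebesgue" unfolding F1_def by (intro sets_Int_ball sets_ge)
  have F1l: "F1 \<in> lmeasurable" using F1s by (rule sub_ball_lm) (auto simp: F1_def)
  define f1 where "f1 = measure lebesgue F1"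
  have f1: "f1 > 0" unfolding f1_def using nonnull_meas_pos[OF F1l] \<eta>1(2) by (simp add: F1_def)
  define \<eta>0 where "\<eta>0 = \<eta>1 * om * f1 powr bq / (8 * C * (om powr ap + 1))"
  have opos: "om powr ap + 1 > 0" by (simp add: add_nonneg_pos)
  have \<eta>0: "\<eta>0 > 0" unfolding \<eta>0_def using \<eta>1 om_pos f1 C opos by (intro divide_pos_pos mult_pos_pos) auto
  show ?thesis
  proof (rule that[OF \<eta>0])
    fix y :: 'a
    define E where "E = {x. w x < \<eta>0} \<inter> ball y 1"
    have Es: "E \<in> sets lebesgue" unfolding E_def by (intro sets_Int_ball sets_lt)
    have El: "E \<in> lmeasurable" using Es by (rule sub_ball_lm) (auto simp: E_def)
    have Ele: "measure lebesgue E \<le> om"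
      using measure_mono_fmeasurable[OF _ Es lmeasurable_ball[of y 1]] om_ball[of y] by (auto simp: E_def)
    have Esmall: "measure lebesgue E \<le> om / 2"
    proof (rule ccontr)
      assume "\<not> ?thesis" then have big: "measure lebesgue E > om / 2" by simp
      have st: "\<eta>1 * (measure lebesgue E / 2) * f1 powr bq \<le> C * (\<eta>0 * measure lebesgue E powr ap)"
        unfolding f1_def
      proof (rule M[of E y 1 \<eta>0 F1 0])
        show "E \<subseteq> cball y 1" by (auto simp: E_def)
        show "F1 \<subseteq> cball 0 (1 / (8 * 1))" by (auto simp: F1_def)
        show "\<And>x. x \<in> E \<Longrightarrow> w x \<le> \<eta>0" by (auto simp: E_def)
        show "\<And>x. x \<in> F1 \<Longrightarrow> \<eta>1 \<le> w x" by (auto simp: F1_def)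
      qed (use Es F1s \<eta>0 \<eta>1 in auto)
      have fb: "f1 powr bq > 0" using f1 by simp
      have "\<eta>1 * (om / 4) * f1 powr bq \<le> \<eta>1 * (measure lebesgue E / 2) * f1 powr bq"
        using big \<eta>1 fb by (intro mult_right_mono mult_left_mono) auto
      also note st
      also have "C * (\<eta>0 * measure lebesgue E powr ap) \<le> C * (\<eta>0 * (om powr ap + 1))"
      proof -
        have "measure lebesgue E powr ap \<le> om powr ap"
          using Ele ap by (intro powr_mono2) auto
        then show ?thesis using C \<eta>0 by (intro mult_left_mono) auto
      qed
      also have "C * (\<eta>0 * (om powr ap + 1)) = \<eta>1 * om * f1 powr bq / 8"
        unfolding \<eta>0_def using C opos cancel_aux[of C "om powr ap + 1" "\<eta>1 * om * f1 powr bq"] by simp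
      finally have "\<eta>1 * (om / 4) * f1 powr bq \<le> \<eta>1 * om * f1 powr bq / 8" .
      moreover have "\<eta>1 * om * f1 powr bq > 0" using \<eta>1 om_pos fb by simp
      ultimately show False by (simp add: field_simps)
    qed
    have eq: "{x. \<eta>0 \<le> w x} \<inter> ball y 1 = ball y 1 - E" by (auto simp: E_def)
    have "measure lebesgue (ball y 1 - E) = measure lebesgue (ball y 1) - measure lebesgue E"
      by (rule measure_Diff) (use Es fmeasurableD2[OF lmeasurable_ball[of y 1]] in \<open>auto simp: E_def infinity_ennreal_def\<close>)
    then show "measure lebesgue (ball y 1) / 2 \<le> measure lebesgue ({x. \<eta>0 \<le> w x} \<inter> ball y 1)"
      using Esmall om_ball[of y] by (simp add: eq)
  qed
qed

lemma step1: obtains K0 where "K0 > 0" "\<And>y. measure lebesgue (ball y 1) / 2 \<le> measure lebesgue ({x. w x \<le> K0} \<inter> ball y 1)"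
proof -
  obtain K1 where K1: "K1 \<ge> 0" "{x. w x \<le> K1} \<inter> ball 0 (1/8) \<notin> null_sets lebesgue" by (rule lev_K1)
  define E0 where "E0 = {x. w x \<le> K1} \<inter> ball (0::'a) (1/8)"
  have E0s: "E0 \<in> sets lebesgue" unfolding E0_def by (intro sets_Int_ball sets_le)
  have E0l: "E0 \<in> lmeasurable" using E0s by (rule sub_ball_lm) (auto simp: E0_def)
  define e0 where "e0 = measure lebesgue E0"
  have e0: "e0 > 0" unfolding e0_def using nonnull_meas_pos[OF E0l] K1(2) by (simp add: E0_def)
  have ob: "(om / 2) powr bq > 0" using om_pos by simp
  define K0 where "K0 = 2 * C * K1 * e0 powr ap / (e0 * (om / 2) powr bq) + 1"
  have K0: "K0 > 0" unfolding K0_def using C K1 e0 ob by (intro add_nonneg_pos divide_nonneg_pos) auto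
  show ?thesis
  proof (rule that[OF K0])
    fix y :: 'a
    define F where "F = {x. K0 < w x} \<inter> ball y 1"
    have Fs: "F \<in> sets lebesgue" unfolding F_def by (intro sets_Int_ball sets_gt)
    have Fsmall: "measure lebesgue F \<le> om / 2"
    proof (rule ccontr)
      assume "\<not> ?thesis" then have big: "measure lebesgue F > om / 2" by simp
      have st: "K0 * (e0 / 2) * measure lebesgue F powr bq \<le> C * (K1 * e0 powr ap)"
        unfolding e0_def
      proof (rule M[of E0 0 "1/8" K1 F y K0])
        show "E0 \<subseteq> cball 0 (1/8)" by (auto simp: E0_def)
        show "F \<subseteq> cball y (1 / (8 * (1/8)))" by (auto simp: F_def)
        show "\<And>x. x \<in> E0 \<Longrightarrow> w x \<le> K1" by (auto simp: E0_def)
        show "\<And>x. x \<in> F \<Longrightarrow> K0 \<le> w x" by (auto simp: F_def)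
      qed (use E0s Fs K0 K1 in auto)
      have "(om / 2) powr bq \<le> measure lebesgue F powr bq"
        using big bq om_pos by (intro powr_mono2) auto
      then have "K0 * (e0 / 2) * (om / 2) powr bq \<le> K0 * (e0 / 2) * measure lebesgue F powr bq"
        using K0 e0 by (intro mult_left_mono) auto
      also note st
      finally have "K0 * (e0 / 2) * (om / 2) powr bq \<le> C * (K1 * e0 powr ap)" .
      then have "K0 \<le> C * (K1 * e0 powr ap) / ((e0 / 2) * (om / 2) powr bq)"
        using e0 ob by (simp add: field_simps)
      also have "\<dots> = K0 - 1" unfolding K0_def using e0 ob by (simp add: field_simps)
      finally show False by simp
    qed
    have eq: "{x. w x \<le> K0} \<inter> ball y 1 = ball y 1 - F" by (auto simp: F_def)
    have "measure lebesgue (ball y 1 - F) = measure lebesgue (ball y 1) - measure lebesgue F"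
      by (rule measure_Diff) (use Fs fmeasurableD2[OF lmeasurable_ball[of y 1]] in \<open>auto simp: F_def infinity_ennreal_def\<close>)
    then show "measure lebesgue (ball y 1) / 2 \<le> measure lebesgue ({x. w x \<le> K0} \<inter> ball y 1)"
      using Fsmall om_ball[of y] by (simp add: eq)
  qed
qed

end

lemma core_ineq:
  fixes X Y \<eta> C K a b :: real
  assumes "\<eta> > 0" "X > 0" "Y \<ge> 0" "\<eta> * (X / 2) * Y powr b \<le> C * (K * X powr a)"
  shows "X powr (1 - a) * Y powr b \<le> 2 * C * K / \<eta>"
proof -
  have X: "X = X powr a * X powr (1 - a)" using assms(2) by (simp add: powr_add[symmetric])
  have "\<eta> / 2 * (X powr a * (X powr (1 - a) * Y powr b)) \<le> X powr a * (C * K)"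
    using assms(4) X by (simp add: algebra_simps) (metis mult.commute mult.left_commute)
  then have "\<eta> / 2 * (X powr (1 - a) * Y powr b) \<le> C * K"
    using assms(2) by (simp add: mult.left_commute[of "\<eta>/2"] mult_le_cancel_left_pos)
  then show ?thesis using assms(1) by (simp add: field_simps)
qed

lemma scale_powr:
  fixes c t n s :: real
  assumes "c > 0" "t > 0"
  shows "(c * t powr n) powr s = c powr s * t powr (n * s)"
  using assms by (simp add: powr_mult powr_powr)

context HY
begin

definition nn :: real where "nn = real DIM('a)"

lemma nn_pos: "nn > 0" by (simp add: nn_def)

lemma mball: "d > 0 \<Longrightarrow> measure lebesgue (ball (x::'a) d) = om * d powr nn"
  unfolding om_def nn_def by (simp add: content_ball powr_realpow)

definition cn :: real where "cn = om / 2 powr (nn + 1)"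
lemma cn_pos: "cn > 0" unfolding cn_def using om_pos by simp

lemma big_dens:
  assumes G: "G \<in> sets lebesgue" and H1: "\<And>y. measure lebesgue (ball y 1) / 2 \<le> measure lebesgue (G \<inter> ball y 1)"
    and R: "R \<ge> 2"
  shows "cn * R powr nn \<le> measure lebesgue (G \<inter> ball (b::'a) R)"
proof -
  have A: "1/2 * measure lebesgue (ball b (R - 1)) \<le> measure lebesgue (G \<inter> ball b R)"
    by (rule avg_lower[OF G]) (use H1 R in auto)
  have B: "measure lebesgue (ball b (R - 1)) = om * (R - 1) powr nn" using R by (intro mball) auto
  have D: "(R / 2) powr nn \<le> (R - 1) powr nn" using R nn_pos by (intro powr_mono2) auto
  have E: "(R / 2) powr nn = R powr nn / 2 powr nn" using R by (simp add: powr_divide)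
  have F: "2 powr (nn + 1) = 2 powr nn * 2" by (simp add: powr_add)
  have "cn * R powr nn = om / 2 * (R powr nn / 2 powr nn)" unfolding cn_def F by simp
  also have "\<dots> \<le> om / 2 * (R - 1) powr nn" using D E om_pos by (intro mult_left_mono) auto
  also have "\<dots> = 1/2 * measure lebesgue (ball b (R - 1))" using B by simp
  also note A
  finally show ?thesis .
qed

lemma step4: "ap + bq \<le> 1"
proof -
  obtain K1 where K1: "K1 \<ge> 0" "{x. w x \<le> K1} \<inter> ball 0 (1/8) \<notin> null_sets lebesgue" by (rule lev_K1)
  define S where "S = {x. w x \<le> K1} \<inter> ball (0::'a) (1/8)"
  have Ss: "S \<in> sets lebesgue" unfolding S_def by (intro sets_Int_ball sets_le)
  have Snn: "S \<notin> null_sets lebesgue" using K1(2) by (simp add: S_def)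
  obtain x0 :: 'a and r0 e0 :: real where r0: "r0 > 0" "e0 > 0"
    and de: "\<And>d. 0 < d \<Longrightarrow> d \<le> r0 \<Longrightarrow> e0 * measure lebesgue (ball x0 d) \<le> measure lebesgue (S \<inter> ball x0 d)"
    by (rule dens_point[OF Ss Snn]) blast
  obtain \<eta>0 where \<eta>0: "\<eta>0 > 0" "\<And>y. measure lebesgue (ball y 1) / 2 \<le> measure lebesgue ({x. \<eta>0 \<le> w x} \<inter> ball y 1)"
    by (rule step2) blast
  define A where "A = 2 * C * K1 / \<eta>0"
  define cst where "cst = (e0 * om) powr (1 - ap) * (cn powr bq * 8 powr (- (nn * bq)))"
  have cst: "cst > 0" unfolding cst_def using r0 om_pos cn_pos by simp
  have key: "d powr (nn * (1 - ap - bq)) \<le> A / cst" if d: "0 < d" "d \<le> min r0 (1/16)" for d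
  proof -
    define R where "R = 1/(8*d)"
    have Rpos: "R > 0" using d by (simp add: R_def)
    have R2: "R \<ge> 2" using d by (simp add: R_def field_simps)
    define E where "E = S \<inter> ball x0 d"
    define F where "F = {x. \<eta>0 \<le> w x} \<inter> ball (0::'a) R"
    have Es: "E \<in> sets lebesgue" unfolding E_def using Ss by (rule sets_Int_ball)
    have Fs: "F \<in> sets lebesgue" unfolding F_def by (intro sets_Int_ball sets_ge)
    have Ege: "e0 * (om * d powr nn) \<le> measure lebesgue E"
      using de[of d] mball[of d x0] d by (simp add: E_def)
    have Epos: "measure lebesgue E > 0"
      using Ege r0 om_pos d by (smt (verit) mult_pos_pos powr_gt_zero)
    have Fge: "cn * R powr nn \<le> measure lebesgue F"
      unfolding F_def by (rule big_dens[OF sets_ge \<eta>0(2) R2])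
    have st: "\<eta>0 * (measure lebesgue E / 2) * measure lebesgue F powr bq \<le> C * (K1 * measure lebesgue E powr ap)"
    proof (rule M[of E x0 d K1 F 0 \<eta>0])
      show "E \<subseteq> cball x0 d" by (auto simp: E_def)
      show "F \<subseteq> cball 0 (1 / (8 * d))" by (auto simp: F_def R_def)
      show "\<And>x. x \<in> E \<Longrightarrow> w x \<le> K1" by (auto simp: E_def S_def)
      show "\<And>x. x \<in> F \<Longrightarrow> \<eta>0 \<le> w x" by (auto simp: F_def)
    qed (use Es Fs d K1 \<eta>0 in auto)
    have ci: "measure lebesgue E powr (1 - ap) * measure lebesgue F powr bq \<le> A"
      using core_ineq[OF \<eta>0(1) Epos _ st] by (simp add: A_def)
    have l1: "(e0 * om) powr (1 - ap) * d powr (nn * (1 - ap)) \<le> measure lebesgue E powr (1 - ap)"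
    proof -
      have "(e0 * (om * d powr nn)) powr (1 - ap) \<le> measure lebesgue E powr (1 - ap)"
        using Ege ap r0 om_pos by (intro powr_mono2) auto
      moreover have "(e0 * (om * d powr nn)) powr (1 - ap) = (e0 * om) powr (1 - ap) * d powr (nn * (1 - ap))"
        using scale_powr[of "e0 * om" d nn "1 - ap"] r0 om_pos d by (simp add: mult.assoc)
      ultimately show ?thesis by simp
    qed
    have l2: "cn powr bq * R powr (nn * bq) \<le> measure lebesgue F powr bq"
    proof -
      have "(cn * R powr nn) powr bq \<le> measure lebesgue F powr bq"
        using Fge bq cn_pos by (intro powr_mono2) auto
      moreover have "(cn * R powr nn) powr bq = cn powr bq * R powr (nn * bq)"
        using scale_powr[of cn R nn bq] cn_pos Rpos by simp
      ultimately show ?thesis by simp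
    qed
    have l3: "R powr (nn * bq) = 8 powr (- (nn * bq)) * d powr (- (nn * bq))"
    proof -
      have "R powr (nn * bq) = 1 / (8 * d) powr (nn * bq)" using d by (simp add: R_def powr_divide)
      also have "\<dots> = (8 * d) powr (- (nn * bq))" by (simp add: powr_minus_divide)
      also have "\<dots> = 8 powr (- (nn * bq)) * d powr (- (nn * bq))" using d by (simp add: powr_mult)
      finally show ?thesis .
    qed
    have "cst * d powr (nn * (1 - ap - bq)) = ((e0 * om) powr (1 - ap) * d powr (nn * (1 - ap))) * (cn powr bq * R powr (nn * bq))"
      unfolding cst_def l3 by (simp add: powr_add[symmetric] algebra_simps)
    also have "\<dots> \<le> measure lebesgue E powr (1 - ap) * measure lebesgue F powr bq"
      using l1 l2 by (intro mult_mono) auto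
    also note ci
    finally show ?thesis using cst by (simp add: field_simps)
  qed
  have "nn * (1 - ap - bq) \<ge> 0"
    by (rule exp_small[of "min r0 (1/16)"]) (use r0 key in auto)
  then show ?thesis using nn_pos by (simp add: zero_le_mult_iff)
qed

lemma step5: "ap + bq \<ge> 1"
proof -
  obtain \<eta>0 where \<eta>0: "\<eta>0 > 0" "\<And>y. measure lebesgue (ball y 1) / 2 \<le> measure lebesgue ({x. \<eta>0 \<le> w x} \<inter> ball y 1)"
    by (rule step2) blast
  obtain K0 where K0: "K0 > 0" "\<And>y. measure lebesgue (ball y 1) / 2 \<le> measure lebesgue ({x. w x \<le> K0} \<inter> ball y 1)"
    by (rule step1) blast
  define T where "T = {x. \<eta>0 \<le> w x} \<inter> ball (0::'a) 1"
  have Ts: "T \<in> sets lebesgue" unfolding T_def by (intro sets_Int_ball sets_ge)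
  have Tl: "T \<in> lmeasurable" using Ts by (rule sub_ball_lm) (auto simp: T_def)
  have Tm: "measure lebesgue T \<ge> om / 2" using \<eta>0(2)[of 0] om_ball[of 0] by (simp add: T_def)
  have Tnn: "T \<notin> null_sets lebesgue"
  proof
    assume "T \<in> null_sets lebesgue"
    then have "measure lebesgue T = 0" by (simp add: measure_def null_setsD1)
    then show False using Tm om_pos by simp
  qed
  obtain x1 :: 'a and r1 e1 :: real where r1: "r1 > 0" "e1 > 0"
    and de: "\<And>d. 0 < d \<Longrightarrow> d \<le> r1 \<Longrightarrow> e1 * measure lebesgue (ball x1 d) \<le> measure lebesgue (T \<inter> ball x1 d)"
    by (rule dens_point[OF Ts Tnn]) blast
  define A where "A = 2 * C * K0 / \<eta>0"
  define cst where "cst = cn powr (1 - ap) * ((e1 * om) powr bq * 8 powr (- (nn * bq)))"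
  have cst: "cst > 0" unfolding cst_def using r1 om_pos cn_pos by simp
  have key: "R powr (nn * (1 - ap - bq)) \<le> A / cst" if R: "R \<ge> max 2 (1/(8*r1))" for R
  proof -
    have R2: "R \<ge> 2" using R by simp
    have Rpos: "R > 0" using R2 by simp
    define \<rho> where "\<rho> = 1/(8*R)"
    have \<rho>pos: "\<rho> > 0" using Rpos by (simp add: \<rho>_def)
    have \<rho>r1: "\<rho> \<le> r1"
    proof -
      have "1/(8*r1) \<le> R" using R by simp
      then have "1 \<le> R * (8 * r1)" using r1 by (simp add: field_simps)
      then show ?thesis unfolding \<rho>_def using Rpos r1 by (simp add: field_simps)
    qed
    define E where "E = {x. w x \<le> K0} \<inter> ball (0::'a) R"
    define F where "F = T \<inter> ball x1 \<rho>"
    have Es: "E \<in> sets lebesgue" unfolding E_def by (intro sets_Int_ball sets_le)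
    have Fs: "F \<in> sets lebesgue" unfolding F_def using Ts by (rule sets_Int_ball)
    have Ege: "cn * R powr nn \<le> measure lebesgue E"
      unfolding E_def by (rule big_dens[OF sets_le K0(2) R2])
    have Epos: "measure lebesgue E > 0"
      using Ege cn_pos Rpos by (smt (verit) mult_pos_pos powr_gt_zero)
    have Fge: "e1 * (om * \<rho> powr nn) \<le> measure lebesgue F"
      using de[OF \<rho>pos \<rho>r1] mball[OF \<rho>pos, of x1] by (simp add: F_def)
    have st: "\<eta>0 * (measure lebesgue E / 2) * measure lebesgue F powr bq \<le> C * (K0 * measure lebesgue E powr ap)"
    proof (rule M[of E 0 R K0 F x1 \<eta>0])
      show "E \<subseteq> cball 0 R" by (auto simp: E_def)
      show "F \<subseteq> cball x1 (1 / (8 * R))" by (auto simp: F_def \<rho>_def)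
      show "\<And>x. x \<in> E \<Longrightarrow> w x \<le> K0" by (auto simp: E_def)
      show "\<And>x. x \<in> F \<Longrightarrow> \<eta>0 \<le> w x" by (auto simp: F_def T_def)
    qed (use Es Fs Rpos K0 \<eta>0 in auto)
    have ci: "measure lebesgue E powr (1 - ap) * measure lebesgue F powr bq \<le> A"
      using core_ineq[OF \<eta>0(1) Epos _ st] by (simp add: A_def)
    have l1: "cn powr (1 - ap) * R powr (nn * (1 - ap)) \<le> measure lebesgue E powr (1 - ap)"
    proof -
      have "(cn * R powr nn) powr (1 - ap) \<le> measure lebesgue E powr (1 - ap)"
        using Ege ap cn_pos by (intro powr_mono2) auto
      moreover have "(cn * R powr nn) powr (1 - ap) = cn powr (1 - ap) * R powr (nn * (1 - ap))"
        using scale_powr[of cn R nn "1 - ap"] cn_pos Rpos by simp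
      ultimately show ?thesis by simp
    qed
    have l2: "(e1 * om) powr bq * \<rho> powr (nn * bq) \<le> measure lebesgue F powr bq"
    proof -
      have "(e1 * (om * \<rho> powr nn)) powr bq \<le> measure lebesgue F powr bq"
        using Fge bq r1 om_pos by (intro powr_mono2) auto
      moreover have "(e1 * (om * \<rho> powr nn)) powr bq = (e1 * om) powr bq * \<rho> powr (nn * bq)"
        using scale_powr[of "e1 * om" \<rho> nn bq] r1 om_pos \<rho>pos by (simp add: mult.assoc)
      ultimately show ?thesis by simp
    qed
    have l3: "\<rho> powr (nn * bq) = 8 powr (- (nn * bq)) * R powr (- (nn * bq))"
    proof -
      have "\<rho> powr (nn * bq) = 1 / (8 * R) powr (nn * bq)" using Rpos by (simp add: \<rho>_def powr_divide)
      also have "\<dots> = (8 * R) powr (- (nn * bq))" by (simp add: powr_minus_divide)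
      also have "\<dots> = 8 powr (- (nn * bq)) * R powr (- (nn * bq))" using Rpos by (simp add: powr_mult)
      finally show ?thesis .
    qed
    have "cst * R powr (nn * (1 - ap - bq)) = (cn powr (1 - ap) * R powr (nn * (1 - ap))) * ((e1 * om) powr bq * \<rho> powr (nn * bq))"
      unfolding cst_def l3 by (simp add: powr_add[symmetric] algebra_simps)
    also have "\<dots> \<le> measure lebesgue E powr (1 - ap) * measure lebesgue F powr bq"
      using l1 l2 by (intro mult_mono) auto
    also note ci
    finally show ?thesis using cst by (simp add: field_simps)
  qed
  have "nn * (1 - ap - bq) \<le> 0"
    by (rule exp_large[of "max 2 (1/(8*r1))"]) (use key in auto)
  then show ?thesis using nn_pos by (simp add: mult_le_0_iff)
qed

end

context HY
begin

lemma ab1: "1 - ap = bq" using step4 step5 by simp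

definition K6 :: real where "K6 = (cn * (om / 2) * (1/8) powr nn) powr bq"
lemma K6_pos: "K6 > 0" unfolding K6_def using cn_pos om_pos by simp

lemma prod_scale:
  assumes d: "d > 0"
  shows "(om / 2 * d powr nn) * (cn * (1/(8*d)) powr nn) = cn * (om / 2) * (1/8) powr nn"
proof -
  have "(d * (1/(8*d))) powr nn = d powr nn * (1/(8*d)) powr nn" by (rule powr_mult; use d in auto)
  moreover have "d * (1/(8*d)) = 1/8" using d by simp
  ultimately have "d powr nn * (1/(8*d)) powr nn = (1/8) powr nn" using d by simp
  then show ?thesis by (simp add: algebra_simps)
qed

lemma K6_bound:
  assumes d: "d > 0" and X: "X \<ge> om / 2 * d powr nn" and Y: "Y \<ge> cn * (1/(8*d)) powr nn"
  shows "X powr bq * Y powr bq \<ge> K6"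
proof -
  have p1: "om / 2 * d powr nn > 0" using om_pos d by simp
  have p2: "cn * (1/(8*d)) powr nn > 0" using cn_pos d by simp
  have "K6 = ((om / 2 * d powr nn) * (cn * (1/(8*d)) powr nn)) powr bq"
    unfolding K6_def prod_scale[OF d] ..
  also have "\<dots> \<le> (X * Y) powr bq"
    using p1 p2 X Y bq by (intro powr_mono2 mult_mono) auto
  also have "\<dots> = X powr bq * Y powr bq" using p1 p2 X Y by (intro powr_mult; auto)
  finally show ?thesis .
qed

lemma step6: obtains m where "m > 0" "AE x in lebesgue. m \<le> w x"
proof -
  obtain \<eta>0 where \<eta>0: "\<eta>0 > 0" "\<And>y. measure lebesgue (ball y 1) / 2 \<le> measure lebesgue ({x. \<eta>0 \<le> w x} \<inter> ball y 1)"
    by (rule step2) blast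
  define \<epsilon> where "\<epsilon> = K6 * \<eta>0 / (4 * C)"
  have \<epsilon>: "\<epsilon> > 0" unfolding \<epsilon>_def using K6_pos \<eta>0 C by simp
  define A where "A = {x. w x < \<epsilon>}"
  have As: "A \<in> sets lebesgue" unfolding A_def by (rule sets_lt)
  have "A \<in> null_sets lebesgue"
  proof (rule dens_null[OF As, of "1/2"])
    fix x r assume x: "x \<in> A" and r: "(r::real) > 0"
    define d where "d = min r (1/16)"
    have d: "d > 0" "d \<le> r" "d \<le> 1/16" using r by (auto simp: d_def)
    define R where "R = 1/(8*d)"
    have R2: "R \<ge> 2" using d by (simp add: R_def field_simps)
    define E where "E = A \<inter> ball x d"
    define F where "F = {x. \<eta>0 \<le> w x} \<inter> ball (0::'a) R"
    have Es: "E \<in> sets lebesgue" unfolding E_def using As by (rule sets_Int_ball)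
    have Fs: "F \<in> sets lebesgue" unfolding F_def by (intro sets_Int_ball sets_ge)
    have Fge: "cn * R powr nn \<le> measure lebesgue F"
      unfolding F_def by (rule big_dens[OF sets_ge \<eta>0(2) R2])
    have "measure lebesgue E \<le> 1/2 * measure lebesgue (ball x d)"
    proof (rule ccontr)
      assume "\<not> ?thesis"
      then have big: "measure lebesgue E > om / 2 * d powr nn" using mball[OF d(1), of x] by simp
      have "om / 2 * d powr nn > 0" using om_pos d by simp
      then have Epos: "measure lebesgue E > 0" using big by linarith
      have st: "\<eta>0 * (measure lebesgue E / 2) * measure lebesgue F powr bq \<le> C * (\<epsilon> * measure lebesgue E powr ap)"
      proof (rule M[of E x d \<epsilon> F 0 \<eta>0])
        show "E \<subseteq> cball x d" by (auto simp: E_def)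
        show "F \<subseteq> cball 0 (1 / (8 * d))" by (auto simp: F_def R_def)
        show "\<And>y. y \<in> E \<Longrightarrow> w y \<le> \<epsilon>" by (auto simp: E_def A_def)
        show "\<And>y. y \<in> F \<Longrightarrow> \<eta>0 \<le> w y" by (auto simp: F_def)
      qed (use Es Fs d \<epsilon> \<eta>0 in auto)
      have ci: "measure lebesgue E powr bq * measure lebesgue F powr bq \<le> 2 * C * \<epsilon> / \<eta>0"
        using core_ineq[OF \<eta>0(1) Epos _ st] ab1 by simp
      have "K6 \<le> measure lebesgue E powr bq * measure lebesgue F powr bq"
        by (rule K6_bound[OF d(1)]) (use big Fge in \<open>auto simp: R_def\<close>)
      also note ci
      also have "2 * C * \<epsilon> / \<eta>0 = K6 / 2" unfolding \<epsilon>_def using C \<eta>0 by (simp add: field_simps)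
      finally show False using K6_pos by simp
    qed
    then show "\<exists>d. 0 < d \<and> d \<le> r \<and> measure lebesgue (A \<inter> ball x d) \<le> 1/2 * measure lebesgue (ball x d)"
      using d by (intro exI[of _ d]) (auto simp: E_def)
  qed auto
  then have "AE x in lebesgue. x \<notin> A" by (rule AE_not_in)
  then have "AE x in lebesgue. \<epsilon> \<le> w x" by eventually_elim (auto simp: A_def)
  then show ?thesis using \<epsilon> by (intro that) auto
qed

lemma step7: obtains M where "M > 0" "AE x in lebesgue. w x \<le> M"
proof -
  obtain K0 where K0: "K0 > 0" "\<And>y. measure lebesgue (ball y 1) / 2 \<le> measure lebesgue ({x. w x \<le> K0} \<inter> ball y 1)"
    by (rule step1) blast
  define Kb where "Kb = 4 * C * K0 / K6"
  have Kb: "Kb > 0" unfolding Kb_def using K6_pos K0 C by simp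
  define A where "A = {x. Kb < w x}"
  have As: "A \<in> sets lebesgue" unfolding A_def by (rule sets_gt)
  have "A \<in> null_sets lebesgue"
  proof (rule dens_null[OF As, of "1/2"])
    fix x r assume x: "x \<in> A" and r: "(r::real) > 0"
    define d where "d = min r (1/16)"
    have d: "d > 0" "d \<le> r" "d \<le> 1/16" using r by (auto simp: d_def)
    define R where "R = 1/(8*d)"
    have R2: "R \<ge> 2" using d by (simp add: R_def field_simps)
    have Rpos: "R > 0" using R2 by simp
    define F where "F = A \<inter> ball x d"
    define E where "E = {x. w x \<le> K0} \<inter> ball (0::'a) R"
    have Fs: "F \<in> sets lebesgue" unfolding F_def using As by (rule sets_Int_ball)
    have Es: "E \<in> sets lebesgue" unfolding E_def by (intro sets_Int_ball sets_le)
    have Ege: "cn * R powr nn \<le> measure lebesgue E"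
      unfolding E_def by (rule big_dens[OF sets_le K0(2) R2])
    have "cn * R powr nn > 0" using cn_pos Rpos by simp
    then have Epos: "measure lebesgue E > 0" using Ege by linarith
    have "measure lebesgue F \<le> 1/2 * measure lebesgue (ball x d)"
    proof (rule ccontr)
      assume "\<not> ?thesis"
      then have big: "measure lebesgue F > om / 2 * d powr nn" using mball[OF d(1), of x] by simp
      have d8: "1 / (8 * R) = d" using d by (simp add: R_def)
      have st: "Kb * (measure lebesgue E / 2) * measure lebesgue F powr bq \<le> C * (K0 * measure lebesgue E powr ap)"
      proof (rule M[of E 0 R K0 F x Kb])
        show "E \<subseteq> cball 0 R" by (auto simp: E_def)
        show "F \<subseteq> cball x (1 / (8 * R))" unfolding d8 by (auto simp: F_def)
        show "\<And>y. y \<in> E \<Longrightarrow> w y \<le> K0" by (auto simp: E_def)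
        show "\<And>y. y \<in> F \<Longrightarrow> Kb \<le> w y" by (auto simp: F_def A_def)
      qed (use Es Fs Rpos K0 Kb in auto)
      have ci: "measure lebesgue E powr bq * measure lebesgue F powr bq \<le> 2 * C * K0 / Kb"
        using core_ineq[OF Kb Epos _ st] ab1 by simp
      have "K6 \<le> measure lebesgue F powr bq * measure lebesgue E powr bq"
        by (rule K6_bound[OF d(1)]) (use big Ege in \<open>auto simp: R_def\<close>)
      also have "\<dots> \<le> 2 * C * K0 / Kb" using ci by (simp add: mult.commute)
      also have "2 * C * K0 / Kb = K6 / 2" unfolding Kb_def using C K0 K6_pos by (simp add: field_simps)
      finally show False using K6_pos by simp
    qed
    then show "\<exists>d. 0 < d \<and> d \<le> r \<and> measure lebesgue (A \<inter> ball x d) \<le> 1/2 * measure lebesgue (ball x d)"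
      using d by (intro exI[of _ d]) (auto simp: F_def)
  qed auto
  then have "AE x in lebesgue. x \<notin> A" by (rule AE_not_in)
  then have "AE x in lebesgue. w x \<le> Kb" by eventually_elim (auto simp: A_def)
  then show ?thesis using Kb by (intro that) auto
qed

end

lemma ft_sum:
  fixes g :: "nat \<Rightarrow> 'a::euclidean_space \<Rightarrow> complex"
  assumes gi: "\<And>k. integrable lebesgue (g k)"
  shows "fourier (\<lambda>t. \<Sum>k<N. complex_of_real (th k) * g k t) x = (\<Sum>k<N. complex_of_real (th k) * fourier (g k) x)"
proof -
  have intk: "integrable lebesgue (\<lambda>t. complex_of_real (th k) * (cis (- 2 * pi * (x \<bullet> t)) * g k t))" for k
  proof -
    have "integrable lebesgue (\<lambda>t. cis (- 2 * pi * (x \<bullet> t)) * g k t)"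
    proof (rule Bochner_Integration.integrable_bound[OF gi[of k]])
      show "(\<lambda>t. cis (- 2 * pi * (x \<bullet> t)) * g k t) \<in> borel_measurable lebesgue"
        using borel_measurable_integrable[OF gi[of k]] cis_meas[of "- 2 * pi" x] by (simp add: borel_measurable_times)
    qed (simp add: norm_mult)
    then show ?thesis by (rule integrable_mult_right)
  qed
  have "fourier (\<lambda>t. \<Sum>k<N. complex_of_real (th k) * g k t) x
      = (\<integral>t. (\<Sum>k<N. complex_of_real (th k) * (cis (- 2 * pi * (x \<bullet> t)) * g k t)) \<partial>lebesgue)"
    unfolding fourier_def by (simp add: sum_distrib_left algebra_simps)
  also have "\<dots> = (\<Sum>k<N. (\<integral>t. complex_of_real (th k) * (cis (- 2 * pi * (x \<bullet> t)) * g k t) \<partial>lebesgue))"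
    using Bochner_Integration.integral_sum[where I="{..<N}" and M=lebesgue and f="\<lambda>k t. complex_of_real (th k) * (cis (- 2 * pi * (x \<bullet> t)) * g k t)"] intk
    by simp
  also have "\<dots> = (\<Sum>k<N. complex_of_real (th k) * fourier (g k) x)"
    unfolding fourier_def by (simp add: integral_mult_right_zero)
  finally show ?thesis .
qed

lemma exp_large_nat:
  fixes s K :: real
  assumes H: "\<And>N::nat. N \<ge> 1 \<Longrightarrow> real N powr s \<le> K"
  shows "s \<le> 0"
proof (rule ccontr)
  assume "\<not> s \<le> 0" then have s: "s > 0" by simp
  define K2 where "K2 = \<bar>K\<bar> + 1"
  have K2: "K2 > 0" "K2 > K" by (auto simp: K2_def)
  define N where "N = nat \<lceil>K2 powr (1/s)\<rceil> + 1"
  have N1: "N \<ge> 1" by (simp add: N_def)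
  have "K2 powr (1/s) \<le> real N" unfolding N_def by linarith
  then have "(K2 powr (1/s)) powr s \<le> real N powr s" using s by (intro powr_mono2) auto
  moreover have "(K2 powr (1/s)) powr s = K2" using s K2 by (simp add: powr_powr)
  ultimately show False using H[OF N1] K2 by linarith
qed

lemma disj_sum_bound:
  fixes g :: "nat \<Rightarrow> 'a \<Rightarrow> complex"
  assumes disj: "\<And>j k. j \<noteq> k \<Longrightarrow> E j \<inter> E k = {}"
    and gb: "\<And>k t. norm (g k t) \<le> indicator (E k) t" and th: "\<And>k. k < N \<Longrightarrow> \<bar>th k\<bar> \<le> 1"
  shows "norm (\<Sum>k<N. complex_of_real (th k) * g k t) \<le> indicator (\<Union>k<N. E k) t"
proof (cases "\<exists>k<N. t \<in> E k")
  case True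
  then obtain k0 where k0: "k0 < N" "t \<in> E k0" by blast
  have z: "g j t = 0" if "j \<noteq> k0" for j
  proof -
    have "t \<notin> E j" using disj[OF that] k0(2) by blast
    then show ?thesis using gb[of j t] by simp
  qed
  have "(\<Sum>k<N. complex_of_real (th k) * g k t) = complex_of_real (th k0) * g k0 t"
    using k0(1) by (subst sum.remove[of _ k0]) (auto simp: z)
  then have "norm (\<Sum>k<N. complex_of_real (th k) * g k t) = \<bar>th k0\<bar> * norm (g k0 t)" by (simp add: norm_mult)
  also have "\<dots> \<le> 1 * 1"
  proof (intro mult_mono)
    show "norm (g k0 t) \<le> 1" using gb[of k0 t] by (cases "t \<in> E k0") auto
  qed (use th[of k0] k0(1) in auto)
  finally show ?thesis using True by (auto simp: indicator_def)
next
  case False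
  then have "g k t = 0" if "k < N" for k using gb[of k t] that by simp
  then show ?thesis by simp
qed

lemma dist_line: "norm (u::'a::euclidean_space) = 1 \<Longrightarrow> dist ((3 * real j) *\<^sub>R u) ((3 * real k) *\<^sub>R u) = 3 * \<bar>real j - real k\<bar>"
proof -
  assume u: "norm u = 1"
  have "(3 * real j) *\<^sub>R u - (3 * real k) *\<^sub>R u = (3 * (real j - real k)) *\<^sub>R u" by (simp add: algebra_simps)
  then have "dist ((3 * real j) *\<^sub>R u) ((3 * real k) *\<^sub>R u) = \<bar>3 * (real j - real k)\<bar> * norm u"
    by (simp only: dist_norm norm_scaleR)
  also have "\<dots> = 3 * \<bar>real j - real k\<bar>" using u by (simp only: abs_mult)
  finally show ?thesis .
qed

lemma disj_balls:
  assumes u: "norm (u::'a::euclidean_space) = 1" and jk: "j \<noteq> k" and r: "r \<le> 1"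
  shows "ball ((3 * real j) *\<^sub>R u) r \<inter> ball ((3 * real k) *\<^sub>R u) r = {}"
proof (rule ccontr)
  assume "\<not> ?thesis"
  then obtain x where x: "dist ((3 * real j) *\<^sub>R u) x < r" "dist ((3 * real k) *\<^sub>R u) x < r" by auto
  have "dist ((3 * real j) *\<^sub>R u) ((3 * real k) *\<^sub>R u) < 2"
    using dist_triangle3[of "(3 * real j) *\<^sub>R u" "(3 * real k) *\<^sub>R u" x] x r dist_commute[of x "(3 * real j) *\<^sub>R u"] dist_commute[of x "(3 * real k) *\<^sub>R u"] by linarith
  moreover have "\<bar>real j - real k\<bar> \<ge> 1" using jk by linarith
  then have "dist ((3 * real j) *\<^sub>R u) ((3 * real k) *\<^sub>R u) \<ge> 3" unfolding dist_line[OF u, of j k] by simp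
  ultimately show False by simp
qed

context HY
begin

definition e8 :: real where "e8 = measure lebesgue (ball (0::'a) (1/8))"
lemma e8_pos: "e8 > 0" unfolding e8_def by (simp add: content_ball_pos)

lemma step8_N:
  assumes N: "N \<ge> 1" and qfin: "q \<noteq> \<infinity>" and m: "m > 0" "AE x in lebesgue. m \<le> w x"
    and Mw: "Mw > 0" "AE x in lebesgue. w x \<le> Mw"
  shows "m * (e8 / 2) * (real N * om / 2) powr bq \<le> C * (Mw * (real N * e8) powr ap)"
proof -
  define qr where "qr = enn2real q"
  have qr1: "1 \<le> qr" unfolding qr_def by (rule enn2real_ge1[OF q qfin])
  have bqq: "bq = 1 / qr" using qfin by (simp add: ia_def qr_def)
  obtain u :: 'a where u: "u \<in> Basis" using nonempty_Basis by blast
  have nu: "norm u = 1" using u by simp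
  define c where "c k = (3 * real k) *\<^sub>R u" for k
  define E where "E k = ball (c k) (1/8)" for k
  define B where "B k = ball (c k) 1" for k
  define g where "g k t = cis (2 * pi * (c k \<bullet> t)) * complex_of_real (indicator (E k) t)" for k t
  have Es: "E k \<in> sets lebesgue" for k by (simp add: E_def)
  have Bs: "B k \<in> sets lebesgue" for k by (simp add: B_def)
  have Efin: "emeasure lebesgue (E k) < \<infinity>" for k
    using fmeasurableD2[OF lmeasurable_ball[of "c k" "1/8"]] by (simp add: E_def less_top)
  have measE: "measure lebesgue (E k) = e8" for k unfolding E_def e8_def by (rule meas_ball_eq)
  have measB: "measure lebesgue (B k) = om" for k unfolding B_def by (rule om_ball)
  have disjB: "B j \<inter> B k = {}" if "j \<noteq> k" for j k
    unfolding B_def c_def by (rule disj_balls[OF nu that]) simp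
  have disjE: "E j \<inter> E k = {}" if "j \<noteq> k" for j k
    unfolding E_def c_def by (rule disj_balls[OF nu that]) simp
  have gm: "g k \<in> borel_measurable lebesgue" for k unfolding g_def by (intro borel_measurable_times cis_meas cind_meas Es)
  have gi: "integrable lebesgue (g k)" for k unfolding g_def by (rule integrable_cind[OF Es Efin]) auto
  have gb: "norm (g k t) \<le> indicator (E k) t" for k t by (simp add: g_def norm_mult)
  have Alow: "e8 / 2 \<le> norm (fourier (g k) x)" if "x \<in> B k" for k x
  proof -
    have "measure lebesgue (E k) / 2 \<le> norm (fourier (g k) x)"
      unfolding g_def
    proof (rule ft_lower[OF Es _ Efin])
      show "E k \<subseteq> cball (c k) (1/8)" by (auto simp: E_def)
      show "dist x (c k) \<le> 1 / (8 * (1/8))" using that by (auto simp: B_def dist_commute)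
    qed simp
    then show ?thesis by (simp add: measE)
  qed
  define Th where "Th = PiE {..<N} (\<lambda>_. {-1::real, 1})"
  have Thfin: "finite Th" unfolding Th_def by (intro finite_PiE) auto
  have Thcard: "card Th > 0" unfolding Th_def by (simp add: card_PiE)
  have Thne: "Th \<noteq> {}" using Thcard by auto
  define f where "f th t = (\<Sum>k<N. complex_of_real (th k) * g k t)" for th t
  have fm: "f th \<in> borel_measurable lebesgue" for th unfolding f_def using gm by simp
  have fi: "integrable lebesgue (f th)" for th unfolding f_def by (intro Bochner_Integration.integrable_sum integrable_mult_right gi)
  have fsum: "fourier (f th) x = (\<Sum>k<N. complex_of_real (th k) * fourier (g k) x)" for th x
    unfolding f_def by (rule ft_sum[OF gi])
  define U where "U = (\<Union>k<N. B k)"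
  have Us: "U \<in> sets lebesgue" unfolding U_def using Bs by auto
  have emU: "emeasure lebesgue U = ennreal (real N * om)"
  proof -
    have "emeasure lebesgue U = (\<Sum>k<N. emeasure lebesgue (B k))"
      unfolding U_def by (rule sum_emeasure[symmetric]) (use Bs disjB in \<open>auto simp: disjoint_family_on_def\<close>)
    also have "\<dots> = (\<Sum>k<N. ennreal om)"
    proof (rule sum.cong[OF refl])
      fix k
      have "emeasure lebesgue (B k) = ennreal (measure lebesgue (B k))"
        unfolding B_def by (rule emeas_lm[OF lmeasurable_ball])
      then show "emeasure lebesgue (B k) = ennreal om" by (simp only: measB)
    qed
    also have "\<dots> = ennreal (real N * om)" using om_pos by (simp add: ennreal_of_nat_eq_real_of_nat ennreal_mult)
    finally show ?thesis .
  qed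
  define \<Phi> where "\<Phi> th = (\<integral>\<^sup>+ x. ennreal (norm (fourier (f th) x) powr qr) * indicator U x \<partial>lebesgue)" for th
  define X where "X = (e8 / 2) powr qr / 2 * (real N * om)"
  have Xpos: "X > 0" unfolding X_def using e8_pos om_pos N by simp
  have sumPhi: "ennreal (real (card Th)) * ennreal X \<le> (\<Sum>th\<in>Th. \<Phi> th)"
  proof -
    have "(\<Sum>th\<in>Th. \<Phi> th) = (\<integral>\<^sup>+ x. (\<Sum>th\<in>Th. ennreal (norm (fourier (f th) x) powr qr) * indicator U x) \<partial>lebesgue)"
      unfolding \<Phi>_def
      by (rule nn_integral_sum[symmetric]) (use fourier_meas[OF fm] Us in measurable)
    also have "\<dots> \<ge> (\<integral>\<^sup>+ x. ennreal (real (card Th) * (e8 / 2) powr qr / 2) * indicator U x \<partial>lebesgue)"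
    proof (rule nn_integral_mono)
      fix x
      show "ennreal (real (card Th) * (e8 / 2) powr qr / 2) * indicator U x
          \<le> (\<Sum>th\<in>Th. ennreal (norm (fourier (f th) x) powr qr) * indicator U x)"
      proof (cases "x \<in> U")
        case True
        then obtain k where k: "k < N" "x \<in> B k" by (auto simp: U_def)
        have ps: "real (card Th) * norm (fourier (g k) x) powr qr / 2
            \<le> (\<Sum>th\<in>Th. norm (\<Sum>j<N. complex_of_real (th j) * fourier (g j) x) powr qr)"
          unfolding Th_def by (rule pair_sum[OF k(1) qr1])
        have "(e8 / 2) powr qr \<le> norm (fourier (g k) x) powr qr"
          using Alow[OF k(2)] e8_pos qr1 by (intro powr_mono2) auto
        then have "real (card Th) * (e8 / 2) powr qr / 2 \<le> real (card Th) * norm (fourier (g k) x) powr qr / 2"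
          by (intro divide_right_mono mult_left_mono) auto
        also note ps
        finally have le: "real (card Th) * (e8 / 2) powr qr / 2 \<le> (\<Sum>th\<in>Th. norm (fourier (f th) x) powr qr)"
          by (simp add: fsum)
        have "ennreal (real (card Th) * (e8 / 2) powr qr / 2) \<le> ennreal (\<Sum>th\<in>Th. norm (fourier (f th) x) powr qr)"
          using le by (rule ennreal_leI)
        also have "\<dots> = (\<Sum>th\<in>Th. ennreal (norm (fourier (f th) x) powr qr))"
          by (rule sum_ennreal[symmetric]) simp
        finally show ?thesis using True by simp
      qed simp
    qed
    also have "(\<integral>\<^sup>+ x. ennreal (real (card Th) * (e8 / 2) powr qr / 2) * indicator U x \<partial>lebesgue)
        = ennreal (real (card Th) * (e8 / 2) powr qr / 2) * emeasure lebesgue U"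
      by (rule nn_integral_cmult_indicator[OF Us])
    also have "\<dots> = ennreal (real (card Th)) * ennreal X"
      unfolding emU X_def using e8_pos om_pos by (simp add: ennreal_mult[symmetric] algebra_simps)
    finally show ?thesis .
  qed
  define Mx where "Mx = Max (\<Phi> ` Th)"
  have Mxin: "Mx \<in> \<Phi> ` Th" unfolding Mx_def using Thfin Thne by (intro Max_in) auto
  then obtain th0 where th0: "th0 \<in> Th" "\<Phi> th0 = Mx" by auto
  have "(\<Sum>th\<in>Th. \<Phi> th) \<le> of_nat (card Th) * Mx"
    by (rule sum_bounded_above) (use Thfin in \<open>auto simp: Mx_def\<close>)
  with sumPhi have "ennreal (real (card Th)) * ennreal X \<le> ennreal (real (card Th)) * Mx"
    by (simp add: ennreal_of_nat_eq_real_of_nat)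
  then have XMx: "ennreal X \<le> \<Phi> th0"
    using Thcard th0 by (subst (asm) ennreal_mult_le_mult_iff) auto
  have low: "ennreal ((m powr qr * X) powr (1 / qr)) \<le> Lp_norm q (\<lambda>x. w x *\<^sub>R fourier (f th0) x)"
  proof -
    have Y: "0 \<le> m powr qr * X" using Xpos by simp
    have "ennreal (m powr qr * X) = ennreal (m powr qr) * ennreal X" using Xpos by (simp add: ennreal_mult)
    also have "\<dots> \<le> ennreal (m powr qr) * \<Phi> th0" using XMx by (rule mult_left_mono) simp
    also have "\<dots> = (\<integral>\<^sup>+ x. ennreal (m powr qr) * (ennreal (norm (fourier (f th0) x) powr qr) * indicator U x) \<partial>lebesgue)"
      unfolding \<Phi>_def by (rule nn_integral_cmult[symmetric]) (use fourier_meas[OF fm] Us in measurable)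
    also have "\<dots> \<le> (\<integral>\<^sup>+ x. ennreal (norm (w x *\<^sub>R fourier (f th0) x) powr enn2real q) \<partial>lebesgue)"
    proof (rule nn_integral_mono_AE)
      show "AE x in lebesgue. ennreal (m powr qr) * (ennreal (norm (fourier (f th0) x) powr qr) * indicator U x)
          \<le> ennreal (norm (w x *\<^sub>R fourier (f th0) x) powr enn2real q)"
        using m(2)
      proof eventually_elim
        case (elim x)
        have "m powr qr * norm (fourier (f th0) x) powr qr = (m * norm (fourier (f th0) x)) powr qr"
          using m by (simp add: powr_mult)
        also have "\<dots> \<le> (\<bar>w x\<bar> * norm (fourier (f th0) x)) powr qr"
          using elim m qr1 by (intro powr_mono2 mult_right_mono) auto
        also have "\<dots> = norm (w x *\<^sub>R fourier (f th0) x) powr enn2real q" by (simp add: qr_def)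
        finally have "ennreal (m powr qr) * ennreal (norm (fourier (f th0) x) powr qr) \<le> ennreal (norm (w x *\<^sub>R fourier (f th0) x) powr enn2real q)"
          by (simp add: ennreal_mult[symmetric] ennreal_leI)
        then show ?case by (cases "x \<in> U") auto
      qed
    qed
    finally have I: "ennreal (m powr qr * X) \<le> (\<integral>\<^sup>+ x. ennreal (norm (w x *\<^sub>R fourier (f th0) x) powr enn2real q) \<partial>lebesgue)" .
    show ?thesis using Lp_lower_fin[OF q qfin Y I] by (simp add: qr_def)
  qed
  define EE where "EE = (\<Union>k<N. E k)"
  have EEs: "EE \<in> sets lebesgue" unfolding EE_def using Es by auto
  have EEm: "measure lebesgue EE \<le> real N * e8"
  proof -
    have "measure lebesgue EE \<le> (\<Sum>k<N. measure lebesgue (E k))"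
      unfolding EE_def by (rule measure_UNION_le) (use Es in auto)
    also have "\<dots> = real N * e8" by (simp add: measE)
    finally show ?thesis .
  qed
  have EEfin: "emeasure lebesgue EE < \<infinity>"
  proof -
    have "emeasure lebesgue EE \<le> (\<Sum>k<N. emeasure lebesgue (E k))"
      unfolding EE_def by (rule emeasure_subadditive_finite) (use Es in auto)
    also have "\<dots> < \<infinity>" using Efin by (simp add: sum_Pinfty less_top)
    finally show ?thesis .
  qed
  have wfm: "(\<lambda>x. w x *\<^sub>R f th0 x) \<in> borel_measurable lebesgue" using wm fm[of th0] by measurable
  have up: "Lp_norm p (\<lambda>x. w x *\<^sub>R f th0 x) \<le> ennreal (Mw * measure lebesgue EE powr ap)"
  proof (rule Lp_upper[OF p wfm EEs EEfin])
    show "0 \<le> Mw" using Mw by simp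
    show "AE x in lebesgue. norm (w x *\<^sub>R f th0 x) \<le> Mw * indicator EE x"
      using Mw(2)
    proof eventually_elim
      case (elim x)
      have nf: "norm (f th0 x) \<le> indicator EE x"
        unfolding f_def EE_def
      proof (rule disj_sum_bound[OF disjE gb])
        fix k assume "k < N"
        then have "th0 k \<in> {-1, 1}" using th0(1) unfolding Th_def by (auto simp: PiE_def Pi_def)
        then show "\<bar>th0 k\<bar> \<le> 1" by auto
      qed
      have "norm (w x *\<^sub>R f th0 x) = \<bar>w x\<bar> * norm (f th0 x)" by simp
      also have "\<dots> \<le> Mw * indicator EE x"
        using elim nf wpos[of x] by (intro mult_mono) auto
      finally show ?case .
    qed
  qed
  have up2: "Mw * measure lebesgue EE powr ap \<le> Mw * (real N * e8) powr ap"
    using EEm ap Mw by (intro mult_left_mono powr_mono2) auto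
  have fin: "Lp_norm p (\<lambda>x. w x *\<^sub>R f th0 x) < \<infinity>"
    by (rule le_less_trans[OF up]) simp
  have "Lp_norm q (\<lambda>x. w x *\<^sub>R fourier (f th0) x) \<le> ennreal C * Lp_norm p (\<lambda>x. w x *\<^sub>R f th0 x)"
    using HypW_def[THEN iffD1, OF H, rule_format, OF conjI[OF fi fin]] .
  also have "\<dots> \<le> ennreal C * ennreal (Mw * (real N * e8) powr ap)"
    using up up2 by (intro mult_left_mono) (auto intro: order.trans ennreal_leI)
  also have "\<dots> = ennreal (C * (Mw * (real N * e8) powr ap))"
    using C Mw by (simp add: ennreal_mult[symmetric])
  finally have "ennreal ((m powr qr * X) powr (1 / qr)) \<le> ennreal (C * (Mw * (real N * e8) powr ap))"
    using low by (rule order.trans[rotated])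
  then have fin_ineq: "(m powr qr * X) powr (1 / qr) \<le> C * (Mw * (real N * e8) powr ap)"
    by (subst (asm) ennreal_le_iff) (use C Mw in auto)
  have "(m powr qr * X) powr (1 / qr) = m * (e8 / 2) * (real N * om / 2) powr bq"
  proof -
    have X2: "m powr qr * X = (m powr qr * (e8 / 2) powr qr) * (real N * om / 2)" unfolding X_def by simp
    have s1: "((m powr qr * (e8 / 2) powr qr) * (real N * om / 2)) powr (1 / qr) = (m powr qr * (e8 / 2) powr qr) powr (1 / qr) * (real N * om / 2) powr (1 / qr)"
      using om_pos by (intro powr_mult; simp)
    have s2: "(m powr qr * (e8 / 2) powr qr) powr (1 / qr) = (m powr qr) powr (1 / qr) * ((e8 / 2) powr qr) powr (1 / qr)"
      by (intro powr_mult; simp)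
    have s3: "(m powr qr) powr (1 / qr) = m" using qr1 m by (simp add: powr_powr)
    have s4: "((e8 / 2) powr qr) powr (1 / qr) = e8 / 2" using qr1 e8_pos by (simp add: powr_powr)
    show ?thesis unfolding X2 s1 s2 s3 s4 bqq ..
  qed
  then show ?thesis using fin_ineq by simp
qed

end

context HY
begin

lemma step8: "ap \<ge> 1/2"
proof (rule ccontr)
  assume "\<not> ?thesis"
  then have a2: "ap < 1/2" by simp
  have ba: "bq > ap" using ab1 a2 by linarith
  have qfin: "q \<noteq> \<infinity>"
  proof
    assume "q = \<infinity>"
    then have "bq = 0" by (simp add: ia_def)
    then show False using ba ap by linarith
  qed
  obtain m where m: "m > 0" "AE x in lebesgue. m \<le> w x" by (rule step6) blast
  obtain Mw where Mw: "Mw > 0" "AE x in lebesgue. w x \<le> Mw" by (rule step7) blast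
  define D where "D = m * (e8 / 2) * (om / 2) powr bq"
  define Cc where "Cc = C * Mw * e8 powr ap"
  have D: "D > 0" unfolding D_def using m e8_pos om_pos by simp
  have key: "real N powr (bq - ap) \<le> Cc / D" if N: "N \<ge> 1" for N :: nat
  proof -
    have Npos: "real N > 0" using N by simp
    have st: "m * (e8 / 2) * (real N * om / 2) powr bq \<le> C * (Mw * (real N * e8) powr ap)"
      by (rule step8_N[OF N qfin m Mw])
    have e1: "(real N * om / 2) powr bq = real N powr bq * (om / 2) powr bq"
      using om_pos by (simp add: powr_mult[symmetric])
    have e2: "(real N * e8) powr ap = real N powr ap * e8 powr ap"
      using e8_pos by (simp add: powr_mult)
    have "real N powr bq * D \<le> real N powr ap * Cc"
      using st unfolding e1 e2 D_def Cc_def by (simp add: algebra_simps)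
    then have "real N powr bq / real N powr ap \<le> Cc / D"
      using D Npos by (simp add: field_simps)
    then show ?thesis using Npos by (simp add: powr_diff)
  qed
  have "bq - ap \<le> 0" by (rule exp_large_nat[OF key])
  then show False using ba by simp
qed

end

lemma inv_ia: assumes "1 \<le> p" shows "1 / p = ennreal (ia p)"
proof (cases "p = \<infinity>")
  case True then show ?thesis by (simp add: ia_def)
next
  case False
  have pr: "1 \<le> enn2real p" using enn2real_ge1[OF assms False] .
  have "p = ennreal (enn2real p)" using False by (simp add: less_top)
  then have "1 / p = ennreal 1 / ennreal (enn2real p)" by simp
  also have "\<dots> = ennreal (1 / enn2real p)" using pr by (intro divide_ennreal) auto
  finally show ?thesis using False by (simp add: ia_def)
qed

theorem theorem2p6:
  fixes p q :: ennreal and w :: "'a::euclidean_space \<Rightarrow> real"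
  assumes "1 \<le> p" and "1 \<le> q"
    and "w \<in> borel_measurable lebesgue"
    and "\<And>x. w x > 0"
    and "\<exists>C::real. \<forall>f :: 'a \<Rightarrow> complex.
           integrable lebesgue f \<and> Lp_norm p (\<lambda>x. w x *\<^sub>R f x) < \<infinity> \<longrightarrow>
           Lp_norm q (\<lambda>x. w x *\<^sub>R fourier f x) \<le> ennreal C * Lp_norm p (\<lambda>x. w x *\<^sub>R f x)"
  shows "1 \<le> p \<and> p \<le> 2 \<and> 1 / p + 1 / q = 1 \<and>
         (\<exists>m M::real. 0 < m \<and> 0 < M \<and> (AE x in lebesgue. m \<le> w x \<and> w x \<le> M))"
proof -
  obtain C0 :: real where C0: "\<forall>f :: 'a \<Rightarrow> complex.
           integrable lebesgue f \<and> Lp_norm p (\<lambda>x. w x *\<^sub>R f x) < \<infinity> \<longrightarrow>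
           Lp_norm q (\<lambda>x. w x *\<^sub>R fourier f x) \<le> ennreal C0 * Lp_norm p (\<lambda>x. w x *\<^sub>R f x)"
    using assms(5) by blast
  define C where "C = max C0 1"
  have Cpos: "C > 0" by (simp add: C_def)
  have HC: "HypW p q w C"
    unfolding HypW_def
  proof (intro allI impI)
    fix f :: "'a \<Rightarrow> complex"
    assume f: "integrable lebesgue f \<and> Lp_norm p (\<lambda>x. w x *\<^sub>R f x) < \<infinity>"
    have "Lp_norm q (\<lambda>x. w x *\<^sub>R fourier f x) \<le> ennreal C0 * Lp_norm p (\<lambda>x. w x *\<^sub>R f x)"
      using C0 f by blast
    also have "\<dots> \<le> ennreal C * Lp_norm p (\<lambda>x. w x *\<^sub>R f x)"
      by (intro mult_right_mono ennreal_leI) (auto simp: C_def)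
    finally show "Lp_norm q (\<lambda>x. w x *\<^sub>R fourier f x) \<le> ennreal C * Lp_norm p (\<lambda>x. w x *\<^sub>R f x)" .
  qed
  interpret HY p q w C
    by (unfold_locales) (use assms(1-4) Cpos HC in auto)
  have a2: "ia p \<ge> 1/2" by (rule step8)
  have ab: "ia p + ia q = 1" using step4 step5 by simp
  have p2: "p \<le> 2"
  proof (cases "p = \<infinity>")
    case True then show ?thesis using a2 by (simp add: ia_def)
  next
    case False
    have pr: "1 \<le> enn2real p" using enn2real_ge1[OF assms(1) False] .
    have "1 / enn2real p \<ge> 1/2" using a2 False by (simp add: ia_def)
    then have "enn2real p \<le> 2" using pr by (simp add: field_simps)
    moreover have "p = ennreal (enn2real p)" using False by (simp add: less_top)
    ultimately show ?thesis by (metis ennreal_leI ennreal_numeral)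
  qed
  have sum1: "1 / p + 1 / q = 1"
  proof -
    have "1 / p + 1 / q = ennreal (ia p) + ennreal (ia q)" using inv_ia[OF assms(1)] inv_ia[OF assms(2)] by simp
    also have "\<dots> = ennreal (ia p + ia q)" using ap bq by (simp add: ennreal_plus)
    also have "\<dots> = 1" using ab by simp
    finally show ?thesis .
  qed
  obtain m where m: "m > 0" "AE x in lebesgue. m \<le> w x" by (rule step6) blast
  obtain M where M: "M > 0" "AE x in lebesgue. w x \<le> M" by (rule step7) blast
  have "AE x in lebesgue. m \<le> w x \<and> w x \<le> M" using m(2) M(2) by eventually_elim auto
  then show ?thesis using assms(1) p2 sum1 m(1) M(1) by blast
qed

end
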